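(* Let $G$ be a finite simple undirected bipartite graph with $n$ vertices, and let $m$ be a nonnegative integer such that $G$ does not contain more than $m$ pairwise vertex-disjoint $4k$-cycles. Then \[ \operatorname{per}(G)=\begin{cases} (-1)^{n/2}\displaystyle\sum_{z=0}^{m}\frac{4^z}{z!}\sum_{T_z}\det(G\setminus T_z), & \text{if } n \text{ is even},\\[2mm] 0, & \text{if } n \text{ is odd},\end{cases} \] where, for each $z$, the inner sum runs over all ordered tuples $T_z=(R_1,\dots,R_z)$ of $z$ mutually vertex-disjoint $4k$-cycles of $G$.
   Context: For a graph $G$ with vertex set $\{v_1,\dots,v_n\}$, the adjacency matrix $A(G)=(a_{ij})$ is the $n\times n$ matrix with $a_{ij}=1$ if $v_i$ and $v_j$ are adjacent and $a_{ij}=0$ otherwise. $\det(G)$ and $\operatorname{per}(G)$ denote the determinant and permanent of $A(G)$, where $\operatorname{per}(M)=\sum_{\sigma\in S_n}\prod_{i=1}^n a_{i,\sigma(i)}$. A cycle of length $l$ is a sequence of distinct vertices $u_1,\dots,u_l$ with $u_i\sim u_{i+1}$ for $i<l$ and $u_l\sim u_1$ (considered as a subgraph); a $4k$-cycle is a cycle whose length is a positive multiple of $4$. For a tuple $T_z$ of vertex-disjoint cycles, $\det(G\setminus T_z)$ denotes the determinant of the principal submatrix of $A(G)$ obtained by deleting the rows and columns corresponding to all vertices lying on the cycles of $T_z$ (the determinant of the empty matrix being $1$). For $z=0$ the only tuple is the empty tuple $T_0$, so the $z=0$ term is $\det(G)$. *)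

theory Defs
  imports "HOL-Combinatorics.Combinatorics" Complex_Main
begin

definition simple_graph :: "'a set \<Rightarrow> ('a \<Rightarrow> 'a \<Rightarrow> bool) \<Rightarrow> bool" where
  "simple_graph V E \<longleftrightarrow> finite V \<and> (\<forall>x y. E x y \<longrightarrow> E y x)
     \<and> (\<forall>x. \<not> E x x) \<and> (\<forall>x y. E x y \<longrightarrow> x \<in> V \<and> y \<in> V)"

definition bipartite :: "'a set \<Rightarrow> ('a \<Rightarrow> 'a \<Rightarrow> bool) \<Rightarrow> bool" where
  "bipartite V E \<longleftrightarrow> (\<exists>X. X \<subseteq> V \<and> (\<forall>x y. E x y \<longrightarrow> (x \<in> X \<longleftrightarrow> y \<notin> X)))"

definition adj :: "('a \<Rightarrow> 'a \<Rightarrow> bool) \<Rightarrow> 'a \<Rightarrow> 'a \<Rightarrow> int" where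
  "adj E i j = (if E i j then 1 else 0)"

text \<open>Determinant and permanent of the principal submatrix of the adjacency matrix
  indexed by S (Leibniz formulas; empty matrix has determinant/permanent 1).\<close>
definition det_on :: "('a \<Rightarrow> 'a \<Rightarrow> bool) \<Rightarrow> 'a set \<Rightarrow> int" where
  "det_on E S = (\<Sum>p\<in>{p. p permutes S}. sign p * (\<Prod>i\<in>S. adj E i (p i)))"

definition per_on :: "('a \<Rightarrow> 'a \<Rightarrow> bool) \<Rightarrow> 'a set \<Rightarrow> int" where
  "per_on E S = (\<Sum>p\<in>{p. p permutes S}. (\<Prod>i\<in>S. adj E i (p i)))"

text \<open>A cycle of G, considered as a subgraph, represented by its edge set:
  the edges {u_i, u_(i+1)} of a cyclic sequence u_1,...,u_l of distinct vertices,
  consecutive ones adjacent (l \<ge> 3 automatically in a simple graph; stated explicitly).\<close>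
definition cycle_edges :: "'a list \<Rightarrow> 'a set set" where
  "cycle_edges us = {{us ! i, us ! ((i + 1) mod length us)} | i. i < length us}"

definition is_cycle :: "('a \<Rightarrow> 'a \<Rightarrow> bool) \<Rightarrow> 'a set set \<Rightarrow> bool" where
  "is_cycle E C \<longleftrightarrow> (\<exists>us. distinct us \<and> length us \<ge> 3
      \<and> (\<forall>i < length us. E (us ! i) (us ! ((i + 1) mod length us)))
      \<and> C = cycle_edges us)"

definition cycle_verts :: "'a set set \<Rightarrow> 'a set" where
  "cycle_verts C = \<Union>C"

definition is_4k_cycle :: "('a \<Rightarrow> 'a \<Rightarrow> bool) \<Rightarrow> 'a set set \<Rightarrow> bool" where
  "is_4k_cycle E C \<longleftrightarrow> is_cycle E C \<and> 4 dvd card C"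

definition disjoint_4k_tuples :: "('a \<Rightarrow> 'a \<Rightarrow> bool) \<Rightarrow> nat \<Rightarrow> 'a set set list set" where
  "disjoint_4k_tuples E z = {Rs. length Rs = z \<and> (\<forall>R \<in> set Rs. is_4k_cycle E R)
      \<and> (\<forall>i < z. \<forall>j < z. i \<noteq> j \<longrightarrow> cycle_verts (Rs ! i) \<inter> cycle_verts (Rs ! j) = {})}"

definition tuple_verts :: "'a set set list \<Rightarrow> 'a set" where
  "tuple_verts Rs = (\<Union>R \<in> set Rs. cycle_verts R)"

end

theory Submission
  imports Defs
begin

definition cv :: "'a list \<Rightarrow> nat \<Rightarrow> 'a" where
  "cv us i = us ! (i mod length us)"

lemma cv_mod: "cv us (i mod length us) = cv us i"
  by (simp add: cv_def)

lemma cv_add_len: "cv us (i + length us) = cv us i"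
  by (simp add: cv_def)

lemma cv_eq_iff:
  assumes "distinct us" "us \<noteq> []"
  shows "cv us i = cv us j \<longleftrightarrow> i mod length us = j mod length us"
  using assms by (simp add: cv_def nth_eq_iff_index_eq)

lemma cv_in_set: "us \<noteq> [] \<Longrightarrow> cv us i \<in> set us"
  by (simp add: cv_def)

lemma set_cv: "us \<noteq> [] \<Longrightarrow> set us = cv us ` {..<length us}"
  by (auto simp: cv_def in_set_conv_nth image_iff)

lemma set_cv_ex: "us \<noteq> [] \<Longrightarrow> x \<in> set us \<Longrightarrow> \<exists>i<length us. x = cv us i"
  using set_cv by blast

lemma cycle_edges_cv:
  "cycle_edges us = (\<lambda>i. {cv us i, cv us (Suc i)}) ` {..<length us}"
proof -
  have "\<And>i. i < length us \<Longrightarrow> cv us i = us ! i" "\<And>i. cv us (Suc i) = us ! ((i + 1) mod length us)"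
    by (simp_all add: cv_def)
  then show ?thesis unfolding cycle_edges_def by (auto simp: image_def)
qed

lemma verts_cycle_edges:
  assumes "us \<noteq> []"
  shows "cycle_verts (cycle_edges us) = set us"
proof
  show "cycle_verts (cycle_edges us) \<subseteq> set us"
    unfolding cycle_verts_def cycle_edges_cv using assms by (auto intro: cv_in_set)
  show "set us \<subseteq> cycle_verts (cycle_edges us)"
  proof
    fix x assume "x \<in> set us"
    then obtain i where "i < length us" "x = cv us i" using set_cv_ex[OF assms] by auto
    then show "x \<in> cycle_verts (cycle_edges us)"
      unfolding cycle_verts_def cycle_edges_cv by blast
  qed
qed

lemma mod_pred_aux:
  assumes "(Suc i) mod l = j mod l" "l > 0"
  shows "i mod l = (j + l - 1) mod l"
proof -
  have "(Suc i + (l - 1)) mod l = (j + (l - 1)) mod l"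
    using assms(1) by (metis mod_add_left_eq)
  moreover have "Suc i + (l - 1) = i + l" using assms(2) by simp
  ultimately show ?thesis using assms(2) by simp
qed

lemma neighbors:
  assumes "distinct us" "us \<noteq> []" "{cv us j, x} \<in> cycle_edges us"
  shows "x = cv us (Suc j) \<or> x = cv us (j + length us - 1)"
proof -
  obtain i where i: "i < length us" "{cv us j, x} = {cv us i, cv us (Suc i)}"
    using assms(3) by (auto simp: cycle_edges_cv)
  show ?thesis
  proof (cases "cv us j = cv us i")
    case True
    then have "i mod length us = j mod length us" using cv_eq_iff[OF assms(1,2)] by simp
    then have "cv us (Suc i) = cv us (Suc j)"
      using cv_eq_iff[OF assms(1,2)] by (metis mod_Suc_eq)
    then show ?thesis using i True by (auto simp: doubleton_eq_iff)
  next
    case False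
    then have "cv us j = cv us (Suc i)" "x = cv us i" using i by (auto simp: doubleton_eq_iff)
    then have "Suc i mod length us = j mod length us" using cv_eq_iff[OF assms(1,2)] by simp
    then have "i mod length us = (j + length us - 1) mod length us"
      using mod_pred_aux assms(2) by blast
    then show ?thesis using \<open>x = cv us i\<close> cv_eq_iff[OF assms(1,2)] by blast
  qed
qed

lemma card_cycle_edges:
  assumes "distinct us" "length us \<ge> 3"
  shows "card (cycle_edges us) = length us"
proof -
  let ?l = "length us"
  have ne: "us \<noteq> []" using assms by auto
  have "inj_on (\<lambda>i. {cv us i, cv us (Suc i)}) {..<?l}"
  proof (rule inj_onI)
    fix i j assume ij: "i \<in> {..<?l}" "j \<in> {..<?l}" "{cv us i, cv us (Suc i)} = {cv us j, cv us (Suc j)}"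
    show "i = j"
    proof (cases "cv us i = cv us j")
      case True then show ?thesis using cv_eq_iff[OF assms(1) ne] ij by simp
    next
      case False
      then have "cv us i = cv us (Suc j)" "cv us (Suc i) = cv us j" using ij(3) by (auto simp: doubleton_eq_iff)
      then have m1: "i = Suc j mod ?l" and m2: "j = Suc i mod ?l"
        using cv_eq_iff[OF assms(1) ne] ij by simp_all
      show ?thesis
      proof (cases "Suc j < ?l")
        case True
        then have "i = Suc j" using m1 by simp
        then have "j = Suc (Suc j) mod ?l" using m2 by simp
        show ?thesis
        proof (cases "Suc (Suc j) < ?l")
          case True
          then show ?thesis using \<open>j = Suc (Suc j) mod ?l\<close> by simp
        next
          case False
          then have "Suc (Suc j) = ?l" using \<open>Suc j < ?l\<close> by simp
          then have "j = 0" using \<open>j = Suc (Suc j) mod ?l\<close> by simp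
          then show ?thesis using \<open>Suc (Suc j) = ?l\<close> assms(2) by simp
        qed
      next
        case False
        then have "Suc j = ?l" using ij by simp
        then have "i = 0" using m1 by simp
        then have "j = 1" using m2 assms(2) by simp
        then show ?thesis using \<open>Suc j = ?l\<close> assms(2) by simp
      qed
    qed
  qed
  then show ?thesis by (simp add: cycle_edges_cv card_image)
qed

lemma cycle_edge_two:
  assumes "distinct us" "length us \<ge> 2" "e \<in> cycle_edges us"
  shows "\<exists>x y. x \<noteq> y \<and> e = {x, y}"
proof -
  obtain i where "i < length us" "e = {cv us i, cv us (Suc i)}"
    using assms(3) by (auto simp: cycle_edges_cv)
  moreover have "cv us i \<noteq> cv us (Suc i)"
  proof -
    have "i mod length us \<noteq> Suc i mod length us"
      using assms(2) by (simp add: mod_Suc)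
    moreover have ne: "us \<noteq> []" using assms(2) by auto
    ultimately show ?thesis using cv_eq_iff[OF assms(1) ne] by simp
  qed
  ultimately show ?thesis by blast
qed

definition pc :: "('a \<Rightarrow> 'a) \<Rightarrow> 'a set set \<Rightarrow> bool" where
  "pc f R \<longleftrightarrow> R = (\<lambda>y. {y, f y}) ` cycle_verts R"

definition C4 :: "('a \<Rightarrow> 'a \<Rightarrow> bool) \<Rightarrow> ('a \<Rightarrow> 'a) \<Rightarrow> 'a set set set" where
  "C4 E f = {R. is_4k_cycle E R \<and> pc f R}"

definition PP :: "('a \<Rightarrow> 'a \<Rightarrow> bool) \<Rightarrow> 'a set \<Rightarrow> ('a \<Rightarrow> 'a) set" where
  "PP E W = {p. p permutes W \<and> (\<forall>i\<in>W. E i (p i))}"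

definition Orient :: "'a set set \<Rightarrow> ('a \<Rightarrow> 'a) set" where
  "Orient R = {f. f permutes cycle_verts R \<and> pc f R}"

lemma cv_add_mult: "cv us (i + length us * j) = cv us i"
  by (simp add: cv_def)

lemma cv_Suc_neq:
  assumes "distinct us" "length us \<ge> 2"
  shows "cv us (Suc i) \<noteq> cv us i"
proof -
  have ne: "us \<noteq> []" using assms(2) by auto
  have "i mod length us \<noteq> Suc i mod length us"
    using assms(2) by (simp add: mod_Suc)
  then show ?thesis using cv_eq_iff[OF assms(1) ne] by simp
qed

lemma is_cycle_obtain:
  assumes "is_cycle E R"
  obtains us where "distinct us" "length us \<ge> 3" "\<And>i. E (cv us i) (cv us (Suc i))"
    "R = cycle_edges us"
proof -
  obtain us where us: "distinct us" "length us \<ge> 3"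
      "\<forall>i < length us. E (us ! i) (us ! ((i + 1) mod length us))" "R = cycle_edges us"
    using assms unfolding is_cycle_def by blast
  have "E (cv us i) (cv us (Suc i))" for i
  proof -
    have "length us > 0" using us(2) by linarith
    then have "i mod length us < length us" by simp
    then have "E (us ! (i mod length us)) (us ! ((i mod length us + 1) mod length us))"
      using us(3) by blast
    then show ?thesis by (simp add: cv_def mod_Suc_eq)
  qed
  then show ?thesis using that us by blast
qed

lemma cycle_edges_is_cycle:
  assumes "distinct us" "length us \<ge> 3" "\<And>i. E (cv us i) (cv us (Suc i))"
  shows "is_cycle E (cycle_edges us)"
proof -
  have "\<forall>i < length us. E (us ! i) (us ! ((i + 1) mod length us))"
  proof (intro allI impI)
    fix i assume "i < length us"
    then show "E (us ! i) (us ! ((i + 1) mod length us))"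
      using assms(3)[of i] by (simp add: cv_def)
  qed
  then show ?thesis unfolding is_cycle_def using assms(1,2) by blast
qed

lemma pc_cong:
  assumes "\<And>y. y \<in> cycle_verts R \<Longrightarrow> f y = g y"
  shows "pc f R = pc g R"
proof -
  have "(\<lambda>y. {y, f y}) ` cycle_verts R = (\<lambda>y. {y, g y}) ` cycle_verts R"
    using assms by (intro image_cong) auto
  then show ?thesis unfolding pc_def by simp
qed

lemma pc_edge:
  assumes "pc f R" "y \<in> cycle_verts R"
  shows "{y, f y} \<in> R"
  using assms unfolding pc_def by (metis imageI)

lemma pc_closed:
  assumes "pc f R" "y \<in> cycle_verts R"
  shows "f y \<in> cycle_verts R"
proof -
  have "{y, f y} \<in> R" using pc_edge[OF assms] .
  then show ?thesis unfolding cycle_verts_def by blast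
qed

lemma cycle_verts_props:
  assumes "is_cycle E R"
  shows "finite (cycle_verts R)" "cycle_verts R \<noteq> {}" "finite R"
proof -
  obtain us where us: "distinct us" "length us \<ge> 3" "R = cycle_edges us"
    using is_cycle_obtain[OF assms] by metis
  have ne: "us \<noteq> []" using us(2) by auto
  show "finite (cycle_verts R)" "cycle_verts R \<noteq> {}"
    using verts_cycle_edges[OF ne] us(3) ne by auto
  show "finite R" using us(3) by (simp add: cycle_edges_cv)
qed

lemma pc_moves:
  assumes "is_cycle E R" "pc f R" "y \<in> cycle_verts R"
  shows "f y \<noteq> y"
proof
  assume fy: "f y = y"
  obtain us where us: "distinct us" "length us \<ge> 3" "R = cycle_edges us"
    using is_cycle_obtain[OF assms(1)] by metis
  have "{y, f y} \<in> cycle_edges us" using pc_edge[OF assms(2,3)] us(3) by simp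
  then obtain a b where "a \<noteq> b" "{y, f y} = {a, b}"
    using cycle_edge_two[OF us(1)] us(2) by fastforce
  then show False using fy by (auto simp: doubleton_eq_iff)
qed

lemma cycle_edge_E:
  assumes "is_cycle E R" "{x, y} \<in> R" "\<And>a b. E a b \<Longrightarrow> E b a"
  shows "E x y"
proof -
  obtain us where us: "distinct us" "length us \<ge> 3" "\<And>i. E (cv us i) (cv us (Suc i))"
      "R = cycle_edges us"
    using is_cycle_obtain[OF assms(1)] by metis
  obtain i where "{x, y} = {cv us i, cv us (Suc i)}"
    using assms(2) us(4) by (auto simp: cycle_edges_cv)
  then show ?thesis using us(3)[of i] assms(3) by (auto simp: doubleton_eq_iff)
qed

lemma pc_image:
  assumes "is_cycle E R" "pc f R" "inj f"
  shows "f ` cycle_verts R = cycle_verts R"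
proof -
  have sub: "f ` cycle_verts R \<subseteq> cycle_verts R" using pc_closed[OF assms(2)] by blast
  have fin: "finite (cycle_verts R)" using cycle_verts_props[OF assms(1)] by simp
  have "card (f ` cycle_verts R) = card (cycle_verts R)"
    using card_image assms(3) by (metis inj_on_subset subset_UNIV)
  then show ?thesis using card_subset_eq[OF fin sub] by simp
qed

lemma pc_inv:
  assumes "is_cycle E R" "pc f R" "bij f"
  shows "pc (inv f) R"
proof -
  have img: "f ` cycle_verts R = cycle_verts R" using pc_image[OF assms(1,2)] assms(3) bij_is_inj by blast
  have "(\<lambda>y. {y, inv f y}) ` cycle_verts R = (\<lambda>y. {y, inv f y}) ` (f ` cycle_verts R)"
    using img by simp
  also have "\<dots> = (\<lambda>x. {f x, x}) ` cycle_verts R"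
    unfolding image_image using assms(3) by (simp add: bij_is_inj)
  also have "\<dots> = (\<lambda>x. {x, f x}) ` cycle_verts R" by (simp add: insert_commute)
  also have "\<dots> = R" using assms(2) unfolding pc_def by simp
  finally show ?thesis unfolding pc_def by simp
qed

lemma C4_inv:
  assumes "bij f"
  shows "C4 E (inv f) = C4 E f"
proof -
  have "pc (inv f) R \<longleftrightarrow> pc f R" if "is_cycle E R" for R
  proof
    assume "pc (inv f) R"
    then have "pc (inv (inv f)) R" using pc_inv[OF that] bij_imp_bij_inv[OF assms] by blast
    then show "pc f R" using inv_inv_eq[OF assms] by simp
  next
    assume "pc f R" then show "pc (inv f) R" using pc_inv[OF that _ assms] by blast
  qed
  then show ?thesis unfolding C4_def is_4k_cycle_def by blast
qed

lemma pc_of_rot: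
  assumes "us \<noteq> []" "\<And>i. f (cv us i) = cv us (Suc i)"
  shows "pc f (cycle_edges us)"
proof -
  have "(\<lambda>y. {y, f y}) ` cycle_verts (cycle_edges us) = (\<lambda>y. {y, f y}) ` (cv us ` {..<length us})"
    using verts_cycle_edges[OF assms(1)] set_cv[OF assms(1)] by simp
  also have "\<dots> = (\<lambda>i. {cv us i, cv us (Suc i)}) ` {..<length us}"
    unfolding image_image using assms(2) by simp
  finally show ?thesis unfolding pc_def cycle_edges_cv by simp
qed

lemma cv_shift:
  assumes "\<And>k. P (j + k)"
  shows "P i \<longleftrightarrow> P i"
  by simp

lemma forward_rot:
  assumes us: "distinct us" "length us \<ge> 3"
    and inj: "inj f" and pcf: "pc f (cycle_edges us)"
    and start: "f (cv us j) = cv us (Suc j)"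
  shows "f (cv us i) = cv us (Suc i)"
proof -
  let ?R = "cycle_edges us" and ?l = "length us"
  have ne: "us \<noteq> []" using us(2) by auto
  have V: "cycle_verts ?R = set us" using verts_cycle_edges[OF ne] .
  have img: "(\<lambda>y. {y, f y}) ` set us = ?R" using pcf V unfolding pc_def by simp
  have "card ((\<lambda>y. {y, f y}) ` set us) = card (set us)"
    using img card_cycle_edges[OF us] distinct_card[OF us(1)] by simp
  then have injg: "inj_on (\<lambda>y. {y, f y}) (set us)"
    by (rule eq_card_imp_inj_on[OF finite_set])
  have step: "f (cv us (Suc n)) = cv us (Suc (Suc n))" if hn: "f (cv us n) = cv us (Suc n)" for n
  proof -
    have "cv us (Suc n) \<in> cycle_verts ?R" using V cv_in_set[OF ne] by simp
    then have "{cv us (Suc n), f (cv us (Suc n))} \<in> ?R" using pc_edge[OF pcf] by blast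
    then have "f (cv us (Suc n)) = cv us (Suc (Suc n)) \<or> f (cv us (Suc n)) = cv us (Suc n + ?l - 1)"
      using neighbors[OF us(1) ne] by blast
    moreover have "cv us (Suc n + ?l - 1) = cv us n"
    proof -
      have "Suc n + ?l - 1 = n + ?l" by simp
      then show ?thesis using cv_add_len by metis
    qed
    moreover have "f (cv us (Suc n)) \<noteq> cv us n"
    proof
      assume a: "f (cv us (Suc n)) = cv us n"
      have "{cv us (Suc n), f (cv us (Suc n))} = {cv us n, f (cv us n)}"
        using a hn by auto
      then have "cv us (Suc n) = cv us n"
        using injg cv_in_set[OF ne] unfolding inj_on_def by blast
      then show False using cv_Suc_neq[OF us(1)] us(2) by simp
    qed
    ultimately show ?thesis by auto
  qed
  have all: "f (cv us (j + k)) = cv us (Suc (j + k))" for k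
  proof (induction k)
    case 0 then show ?case using start by simp
  next
    case (Suc k) then show ?case using step[of "j + k"] by simp
  qed
  have eq: "j + (i + ?l * j - j) = i + ?l * j"
  proof -
    have "1 \<le> ?l" using us(2) by linarith
    then have "j \<le> ?l * j" using mult_le_mono1[of 1 ?l j] by simp
    then show ?thesis by linarith
  qed
  have "f (cv us (i + ?l * j)) = cv us (Suc (i + ?l * j))"
    using all[of "i + ?l * j - j"] eq by simp
  moreover have "Suc (i + ?l * j) = Suc i + ?l * j" by simp
  ultimately show ?thesis using cv_add_mult by metis
qed

lemma col_rot:
  assumes "distinct us" "us \<noteq> []"
  shows "cycle_of_list us (cv us i) = cv us (Suc i)"
proof -
  note False = assms(2)
  have m: "map (cycle_of_list us) us = rotate1 us"
    using cyclic_rotation[OF assms(1), of 1] by simp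
  have lt: "i mod length us < length us" using False by simp
  have "cycle_of_list us (us ! (i mod length us)) = rotate1 us ! (i mod length us)"
    using m lt by (metis nth_map)
  also have "\<dots> = us ! (Suc (i mod length us) mod length us)"
    using lt by (simp add: nth_rotate1)
  finally show ?thesis by (simp add: cv_def mod_Suc_eq)
qed

lemma perm_eq_on:
  assumes "f permutes S" "g permutes S" "\<And>x. x \<in> S \<Longrightarrow> f x = g x"
  shows "f = g"
proof
  fix x show "f x = g x"
    using assms unfolding permutes_def by (cases "x \<in> S") auto
qed

lemma rot_eq_col:
  assumes "distinct us" "us \<noteq> []" "f permutes set us" "\<And>i. f (cv us i) = cv us (Suc i)"
  shows "f = cycle_of_list us"
proof (rule perm_eq_on[OF assms(3) cycle_permutes])
  fix x assume "x \<in> set us"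
  then obtain i where "x = cv us i" using set_cv_ex[OF assms(2)] by auto
  then show "f x = cycle_of_list us x" using assms(4) col_rot[OF assms(1,2)] by simp
qed

lemma Orient_eq:
  assumes us: "distinct us" "length us \<ge> 3"
  shows "Orient (cycle_edges us) = {cycle_of_list us, inv (cycle_of_list us)}"
    and "cycle_of_list us \<noteq> inv (cycle_of_list us)"
proof -
  let ?R = "cycle_edges us" and ?l = "length us" and ?c = "cycle_of_list us"
  have ne: "us \<noteq> []" using us(2) by auto
  have V: "cycle_verts ?R = set us" using verts_cycle_edges[OF ne] .
  have cyc: "is_cycle (\<lambda>a b. True) ?R"
    using cycle_edges_is_cycle[OF us, of "\<lambda>a b. True"] by simp
  have cp: "?c permutes set us" by (rule cycle_permutes)
  have pcc: "pc ?c ?R" using pc_of_rot[OF ne col_rot[OF us(1) ne]] .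
  have cinO: "?c \<in> Orient ?R" using cp pcc V unfolding Orient_def by simp
  have icinO: "inv ?c \<in> Orient ?R"
    using permutes_inv[OF cp] pc_inv[OF cyc pcc permutes_bij[OF cp]] V unfolding Orient_def by simp
  have sub: "f = ?c \<or> f = inv ?c" if "f \<in> Orient ?R" for f
  proof -
    have fp: "f permutes set us" and pcf: "pc f ?R" using that V unfolding Orient_def by auto
    have bf: "bij f" using permutes_bij[OF fp] .
    have "cv us 0 \<in> cycle_verts ?R" using V cv_in_set[OF ne] by simp
    then have "{cv us 0, f (cv us 0)} \<in> ?R" using pc_edge[OF pcf] by blast
    then have "f (cv us 0) = cv us (Suc 0) \<or> f (cv us 0) = cv us (0 + ?l - 1)"
      using neighbors[OF us(1) ne] by blast
    then show ?thesis
    proof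
      assume "f (cv us 0) = cv us (Suc 0)"
      then have "\<And>i. f (cv us i) = cv us (Suc i)"
        using forward_rot[OF us bij_is_inj[OF bf] pcf] by blast
      then show ?thesis using rot_eq_col[OF us(1) ne fp] by blast
    next
      assume a: "f (cv us 0) = cv us (0 + ?l - 1)"
      have "cv us (Suc (?l - 1)) = cv us 0"
      proof -
        have "Suc (?l - 1) = 0 + ?l" using ne by simp
        then show ?thesis using cv_add_len by metis
      qed
      then have "inv f (cv us (?l - 1)) = cv us (Suc (?l - 1))"
        using a permutes_inverses(2)[OF fp] by (metis add_0)
      moreover have "pc (inv f) ?R" using pc_inv[OF cyc pcf bf] .
      moreover have "inj (inv f)" using bij_is_inj[OF bij_imp_bij_inv[OF bf]] .
      ultimately have "\<And>i. inv f (cv us i) = cv us (Suc i)"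
        using forward_rot[OF us] by blast
      then have "inv f = ?c" using rot_eq_col[OF us(1) ne permutes_inv[OF fp]] by blast
      then have "f = inv ?c" using inv_inv_eq[OF bf] by metis
      then show ?thesis by blast
    qed
  qed
  show "Orient ?R = {?c, inv ?c}" using sub cinO icinO by blast
  show "?c \<noteq> inv ?c"
  proof
    assume h: "?c = inv ?c"
    have "?c (?c (cv us 0)) = cv us 0"
      using permutes_inverses(1)[OF cp] h by metis
    then have "cv us (Suc (Suc 0)) = cv us 0" using col_rot[OF us(1) ne] by simp
    then have "Suc (Suc 0) mod ?l = 0" using cv_eq_iff[OF us(1) ne] by simp
    then show False using us(2) by simp
  qed
qed

lemma card_Orient:
  assumes "is_cycle E R"
  shows "card (Orient R) = 2"
proof -
  obtain us where us: "distinct us" "length us \<ge> 3" "R = cycle_edges us"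
    using is_cycle_obtain[OF assms] by metis
  show ?thesis using Orient_eq[OF us(1,2)] us(3) by simp
qed

lemma cv_reach:
  assumes "us \<noteq> []"
  shows "cv us (j + (i + length us * j - j)) = cv us i"
proof -
  have "1 \<le> length us" using assms by (cases us) auto
  then have "j \<le> length us * j" using mult_le_mono1[of 1 "length us" j] by simp
  then have "j + (i + length us * j - j) = i + length us * j" by linarith
  then show ?thesis using cv_add_mult by metis
qed

lemma img_obtain_aux: "R = g ` V \<Longrightarrow> e \<in> R \<Longrightarrow> \<exists>y\<in>V. e = g y"
  by blast

lemma pc_obtain:
  assumes "pc f R" "e \<in> R"
  shows "\<exists>y\<in>cycle_verts R. e = {y, f y}"
  using img_obtain_aux[of R "\<lambda>y. {y, f y}" "cycle_verts R" e] assms unfolding pc_def by simp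

lemma edge_in:
  assumes "us \<noteq> []"
  shows "{cv us i, cv us (Suc i)} \<in> cycle_edges us"
proof -
  have lt: "i mod length us \<in> {..<length us}" using assms by simp
  have "cv us (i mod length us) = cv us i" "cv us (Suc (i mod length us)) = cv us (Suc i)"
    by (simp_all add: cv_def mod_Suc_eq)
  then show ?thesis unfolding cycle_edges_cv using lt by (metis (no_types, lifting) image_eqI)
qed

lemma C4_rot:
  assumes us: "distinct us" "length us \<ge> 2"
    and fp: "f permutes set us" and rot: "\<And>i. f (cv us i) = cv us (Suc i)"
  shows "C4 E f = (if is_4k_cycle E (cycle_edges us) then {cycle_edges us} else {})"
proof -
  have ne: "us \<noteq> []" using us(2) by auto
  have pcu: "pc f (cycle_edges us)" using pc_of_rot[OF ne rot] .
  have "R = cycle_edges us" if R: "R \<in> C4 E f" for R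
  proof -
    have cyc: "is_cycle E R" and pcR: "pc f R" using R unfolding C4_def is_4k_cycle_def by auto
    have sub: "cycle_verts R \<subseteq> set us"
    proof
      fix y assume "y \<in> cycle_verts R"
      then have "f y \<noteq> y" using pc_moves[OF cyc pcR] by blast
      then show "y \<in> set us" using fp unfolding permutes_def by blast
    qed
    obtain y0 where y0: "y0 \<in> cycle_verts R" using cycle_verts_props(2)[OF cyc] by blast
    then obtain j where j: "y0 = cv us j" using sub set_cv_ex[OF ne] by blast
    have reach: "cv us (j + k) \<in> cycle_verts R" for k
    proof (induction k)
      case 0 then show ?case using y0 j by simp
    next
      case (Suc k)
      then have "f (cv us (j + k)) \<in> cycle_verts R" using pc_closed[OF pcR] by blast
      then show ?case using rot by simp
    qed
    have "set us \<subseteq> cycle_verts R"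
    proof
      fix x assume "x \<in> set us"
      then obtain i where "x = cv us i" using set_cv_ex[OF ne] by auto
      then show "x \<in> cycle_verts R" using reach cv_reach[OF ne, of j i] by metis
    qed
    then have V: "cycle_verts R = cycle_verts (cycle_edges us)"
      using sub verts_cycle_edges[OF ne] by auto
    have "R = (\<lambda>y. {y, f y}) ` cycle_verts R" using pcR unfolding pc_def .
    also have "\<dots> = (\<lambda>y. {y, f y}) ` cycle_verts (cycle_edges us)" by (simp only: V)
    also have "\<dots> = cycle_edges us" using pcu unfolding pc_def by (rule sym)
    finally show ?thesis .
  qed
  note RR = this
  have inC: "cycle_edges us \<in> C4 E f \<longleftrightarrow> is_4k_cycle E (cycle_edges us)"
    using pcu unfolding C4_def by simp
  show ?thesis
  proof (cases "is_4k_cycle E (cycle_edges us)")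
    case True
    then have "C4 E f = {cycle_edges us}" using RR inC by blast
    then show ?thesis using True by simp
  next
    case False
    then have "C4 E f = {}" using RR inC by blast
    then show ?thesis using False by simp
  qed
qed

lemma is4k_iff:
  assumes us: "distinct us" "length us \<ge> 2" and E: "\<And>i. E (cv us i) (cv us (Suc i))"
  shows "is_4k_cycle E (cycle_edges us) \<longleftrightarrow> 4 dvd length us"
proof (cases "length us \<ge> 3")
  case True
  then show ?thesis unfolding is_4k_cycle_def
    using cycle_edges_is_cycle[of us E, OF us(1) True E] card_cycle_edges[OF us(1) True] by simp
next
  case False
  then have l2: "length us = 2" using us(2) by simp
  have "{..<length us} = {0, 1}" using l2 by auto
  then have "cycle_edges us = {{cv us 0, cv us 1}, {cv us 1, cv us (Suc (Suc 0))}}"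
    by (simp add: cycle_edges_cv)
  moreover have "cv us (Suc (Suc 0)) = cv us 0" using cv_add_len[of us 0] l2 by (simp add: numeral_2_eq_2)
  ultimately have "cycle_edges us = {{cv us 0, cv us 1}}" by (auto simp: insert_commute)
  then have "card (cycle_edges us) = 1" by simp
  then show ?thesis unfolding is_4k_cycle_def using l2 by simp
qed

lemma split_cycle:
  assumes cyc: "is_cycle E R" and pcR: "pc p R" and inv: "\<And>y. p y \<in> A \<longleftrightarrow> y \<in> A"
  shows "cycle_verts R \<subseteq> A \<or> cycle_verts R \<inter> A = {}"
proof -
  obtain us where us: "distinct us" "length us \<ge> 3" "R = cycle_edges us"
    using is_cycle_obtain[OF cyc] by metis
  have ne: "us \<noteq> []" using us(2) by auto
  have V: "cycle_verts R = set us" using verts_cycle_edges[OF ne] us(3) by simp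
  have st: "cv us (Suc i) \<in> A \<longleftrightarrow> cv us i \<in> A" for i
  proof -
    have "{cv us i, cv us (Suc i)} \<in> R" using us(3) edge_in[OF ne] by simp
    then obtain y where "{cv us i, cv us (Suc i)} = {y, p y}"
      using pc_obtain[OF pcR] by blast
    then show ?thesis using inv[of y] by (auto simp: doubleton_eq_iff)
  qed
  have reach: "cv us (j + k) \<in> A \<longleftrightarrow> cv us j \<in> A" for j k
    by (induction k) (use st in auto)
  have all: "x \<in> A \<longleftrightarrow> cv us 0 \<in> A" if xin: "x \<in> set us" for x
  proof -
    obtain i where "x = cv us i" using set_cv_ex[OF ne xin] by auto
    then show ?thesis using reach[of 0] cv_reach[OF ne, of 0 i] by metis
  qed
  show ?thesis using all V by blast
qed

lemma perm_restrict_move: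
  assumes "is_cycle E R" "pc (perm_restrict p A) R" "y \<in> cycle_verts R"
  shows "y \<in> A"
  using pc_moves[OF assms] by (auto simp: perm_restrict_def split: if_splits)

lemma decomp:
  assumes inv: "\<And>y. p y \<in> A \<longleftrightarrow> y \<in> A"
  shows "C4 E p = C4 E (perm_restrict p A) \<union> C4 E (perm_restrict p (-A))"
    and "C4 E (perm_restrict p A) \<inter> C4 E (perm_restrict p (-A)) = {}"
    and "p = perm_restrict p A \<circ> perm_restrict p (-A)"
proof -
  have inv2: "\<And>y. p y \<in> -A \<longleftrightarrow> y \<in> -A" using inv by auto
  have r1: "pc p R \<longleftrightarrow> pc (perm_restrict p B) R" if "cycle_verts R \<subseteq> B" for R B
    using that by (intro pc_cong) (auto simp: perm_restrict_def)
  show "C4 E p = C4 E (perm_restrict p A) \<union> C4 E (perm_restrict p (-A))"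
  proof
    show "C4 E p \<subseteq> C4 E (perm_restrict p A) \<union> C4 E (perm_restrict p (- A))"
    proof
      fix R assume R: "R \<in> C4 E p"
      then have cyc: "is_cycle E R" and pcR: "pc p R" unfolding C4_def is_4k_cycle_def by auto
      have "cycle_verts R \<subseteq> A \<or> cycle_verts R \<subseteq> -A" using split_cycle[OF cyc pcR inv] by blast
      then show "R \<in> C4 E (perm_restrict p A) \<union> C4 E (perm_restrict p (- A))"
        using r1 R unfolding C4_def by blast
    qed
    show "C4 E (perm_restrict p A) \<union> C4 E (perm_restrict p (- A)) \<subseteq> C4 E p"
    proof
      fix R assume R: "R \<in> C4 E (perm_restrict p A) \<union> C4 E (perm_restrict p (- A))"
      then have cyc: "is_cycle E R" unfolding C4_def is_4k_cycle_def by auto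
      show "R \<in> C4 E p"
      proof (cases "R \<in> C4 E (perm_restrict p A)")
        case True
        then have pcR: "pc (perm_restrict p A) R" unfolding C4_def by auto
        have "cycle_verts R \<subseteq> A" using perm_restrict_move[OF cyc pcR] by blast
        then show ?thesis using r1 True unfolding C4_def by blast
      next
        case False
        then have R2: "R \<in> C4 E (perm_restrict p (-A))" using R by blast
        then have pcR: "pc (perm_restrict p (-A)) R" unfolding C4_def by auto
        have "cycle_verts R \<subseteq> -A" using perm_restrict_move[OF cyc pcR] by blast
        then show ?thesis using r1 R2 unfolding C4_def by blast
      qed
    qed
  qed
  show "C4 E (perm_restrict p A) \<inter> C4 E (perm_restrict p (-A)) = {}"
  proof (rule ccontr)
    assume "C4 E (perm_restrict p A) \<inter> C4 E (perm_restrict p (-A)) \<noteq> {}"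
    then obtain R where R1: "R \<in> C4 E (perm_restrict p A)" and R2: "R \<in> C4 E (perm_restrict p (-A))"
      by blast
    have cyc: "is_cycle E R" using R1 unfolding C4_def is_4k_cycle_def by auto
    obtain y where y: "y \<in> cycle_verts R" using cycle_verts_props(2)[OF cyc] by blast
    have "y \<in> A" using perm_restrict_move[OF cyc _ y] R1 unfolding C4_def by blast
    moreover have "y \<in> -A" using perm_restrict_move[OF cyc _ y] R2 unfolding C4_def by blast
    ultimately show False by blast
  qed
  show "p = perm_restrict p A \<circ> perm_restrict p (-A)"
  proof
    fix x show "p x = (perm_restrict p A \<circ> perm_restrict p (-A)) x"
      using inv[of x] by (cases "x \<in> A") (auto simp: perm_restrict_def)
  qed
qed

lemma C4_disjoint:
  assumes "bij p" "R \<in> C4 E p" "R' \<in> C4 E p" "R \<noteq> R'"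
  shows "cycle_verts R \<inter> cycle_verts R' = {}"
proof (rule ccontr)
  assume ne: "cycle_verts R \<inter> cycle_verts R' \<noteq> {}"
  have cyc: "is_cycle E R" "is_cycle E R'" and pcs: "pc p R" "pc p R'"
    using assms(2,3) unfolding C4_def is_4k_cycle_def by auto
  have inv: "p y \<in> cycle_verts Q \<longleftrightarrow> y \<in> cycle_verts Q" if "is_cycle E Q" "pc p Q" for Q y
  proof
    assume "p y \<in> cycle_verts Q"
    then have "p y \<in> p ` cycle_verts Q" using pc_image[OF that bij_is_inj[OF assms(1)]] by simp
    then show "y \<in> cycle_verts Q" using bij_is_inj[OF assms(1)] by (auto dest: injD)
  next
    assume "y \<in> cycle_verts Q" then show "p y \<in> cycle_verts Q" using pc_closed[OF that(2)] by blast
  qed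
  have "cycle_verts R' \<subseteq> cycle_verts R"
    using split_cycle[OF cyc(2) pcs(2) inv[OF cyc(1) pcs(1)]] ne by blast
  moreover have "cycle_verts R \<subseteq> cycle_verts R'"
    using split_cycle[OF cyc(1) pcs(1) inv[OF cyc(2) pcs(2)]] ne by blast
  ultimately have V: "cycle_verts R = cycle_verts R'" by blast
  have "R = (\<lambda>y. {y, p y}) ` cycle_verts R" using pcs(1) unfolding pc_def .
  also have "\<dots> = (\<lambda>y. {y, p y}) ` cycle_verts R'" by (simp only: V)
  also have "\<dots> = R'" using pcs(2) unfolding pc_def by (rule sym)
  finally have "R = R'" .
  then show False using assms(4) by blast
qed

lemma C4_finite:
  assumes "p permutes W" "finite W"
  shows "finite (C4 E p)"
proof -
  have "C4 E p \<subseteq> Pow (Pow W)"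
  proof
    fix R assume R: "R \<in> C4 E p"
    then have cyc: "is_cycle E R" and pcR: "pc p R" unfolding C4_def is_4k_cycle_def by auto
    have "y \<in> W" if "y \<in> cycle_verts R" for y
      using pc_moves[OF cyc pcR that] assms(1) unfolding permutes_def by blast
    moreover have "p y \<in> W" if "y \<in> cycle_verts R" for y
      using pc_moves[OF cyc pcR that] assms(1) permutes_in_image[OF assms(1)] unfolding permutes_def
      by metis
    ultimately show "R \<in> Pow (Pow W)" using pcR unfolding pc_def by (metis (no_types, lifting) PowI image_subsetI insert_subset empty_subsetI)
  qed
  then show ?thesis using assms(2) finite_subset by blast
qed

lemma sign_col:
  assumes "distinct us" "us \<noteq> []"
  shows "sign (cycle_of_list us) = (-1::int) ^ (length us - 1)"
  using assms
proof (induction us rule: cycle_of_list.induct)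
  case (1 i j cs)
  have "sign (cycle_of_list (i # j # cs)) = sign (transpose i j) * sign (cycle_of_list (j # cs))"
    by (simp add: sign_compose permutation_swap_id permutation_of_cycle)
  also have "\<dots> = - sign (cycle_of_list (j # cs))"
    using "1.prems" by (simp add: sign_swap_id)
  also have "\<dots> = (-1::int) ^ (length (i # j # cs) - 1)"
    using "1.IH" "1.prems" by simp
  finally show ?case .
next
  case ("2_1") then show ?case by simp
next
  case ("2_2" v) then show ?case by simp
qed

lemma sign_arith:
  assumes "even l" "l \<ge> 2"
  shows "(-1::int) ^ (l div 2) * (-1) ^ (l - 1) = (if 4 dvd l then -1 else 1)"
proof -
  have "(-1::int) ^ (l div 2) * (-1) ^ (l - 1) = (-1) ^ (l div 2 + (l - 1))"
    by (simp add: power_add)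
  also have "\<dots> = (if even (l div 2 + (l - 1)) then 1 else -1)"
    by (rule minus_one_power_iff)
  also have "even (l div 2 + (l - 1)) \<longleftrightarrow> \<not> 4 dvd l"
    using assms by presburger
  finally show ?thesis by simp
qed

lemma prod_adj:
  assumes "finite W"
  shows "(\<Prod>i\<in>W. adj E i (p i)) = (if \<forall>i\<in>W. E i (p i) then 1 else 0)"
proof (cases "\<forall>i\<in>W. E i (p i)")
  case True
  then show ?thesis by (simp add: adj_def)
next
  case False
  then obtain i where "i \<in> W" "\<not> E i (p i)" by blast
  then have "adj E i (p i) = 0" by (simp add: adj_def)
  then show ?thesis using False assms \<open>i \<in> W\<close> by (metis prod_zero_iff)
qed

lemma PP_alt: "PP E W = {p \<in> {p. p permutes W}. \<forall>i\<in>W. E i (p i)}"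
  by (simp add: PP_def)

lemma per_PP:
  assumes "finite W"
  shows "per_on E W = int (card (PP E W))"
proof -
  have fin: "finite {p. p permutes W}" using finite_permutations[OF assms] .
  have "per_on E W = (\<Sum>p\<in>{p. p permutes W}. if \<forall>i\<in>W. E i (p i) then 1 else 0)"
    unfolding per_on_def using prod_adj[OF assms] by simp
  also have "\<dots> = (\<Sum>p\<in>PP E W. 1)"
    unfolding PP_alt using sum.inter_filter[OF fin, of "\<lambda>_. (1::int)"] by simp
  finally show ?thesis by simp
qed

lemma det_PP:
  assumes "finite W"
  shows "det_on E W = (\<Sum>p\<in>PP E W. sign p)"
proof -
  have fin: "finite {p. p permutes W}" using finite_permutations[OF assms] .
  have "det_on E W = (\<Sum>p\<in>{p. p permutes W}. if \<forall>i\<in>W. E i (p i) then sign p else 0)"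
    unfolding det_on_def using prod_adj[OF assms] by (intro sum.cong) auto
  also have "\<dots> = (\<Sum>p\<in>PP E W. sign p)"
    unfolding PP_alt using sum.inter_filter[OF fin, of "\<lambda>p. sign p"] by simp
  finally show ?thesis .
qed

lemma finite_PP:
  assumes "finite W"
  shows "finite (PP E W)"
  using finite_permutations[OF assms] unfolding PP_def by (rule finite_subset[rotated]) auto

lemma permutes_shrink:
  assumes "q permutes W" "\<And>x. x \<in> Ob \<Longrightarrow> q x = x"
  shows "q permutes (W - Ob)"
  using assms unfolding permutes_def by blast

lemma C4_id: "C4 E id = {}"
proof -
  have False if R: "R \<in> C4 E id" for R
  proof -
    have cyc: "is_cycle E R" and pcR: "pc id R" using R unfolding C4_def is_4k_cycle_def by auto
    obtain y where "y \<in> cycle_verts R" using cycle_verts_props(2)[OF cyc] by blast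
    then show False using pc_moves[OF cyc pcR] by simp
  qed
  then show ?thesis by blast
qed

lemma sign_main:
  assumes "finite W" "p \<in> PP E W" "\<forall>x. \<not> E x x" "\<forall>x y. E x y \<longrightarrow> (x \<in> X \<longleftrightarrow> y \<notin> X)"
  shows "even (card W) \<and> (-1::int) ^ (card W div 2) * sign p = (-1) ^ (card (C4 E p))"
  using assms(1,2)
proof (induction W arbitrary: p rule: finite_psubset_induct)
  case (psubset W)
  have pW: "p permutes W" and pE: "\<forall>i\<in>W. E i (p i)" using psubset.prems unfolding PP_def by auto
  show ?case
  proof (cases "W = {}")
    case True
    then have "p = id" using pW by (simp add: permutes_empty)
    then have "C4 E p = {}" using C4_id by simp
    moreover have "sign p = 1" using \<open>p = id\<close> by simp
    ultimately show ?thesis using True by simp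
  next
    case False
    then obtain s where s: "s \<in> W" by blast
    have perm: "permutation p" using permutation_permutes psubset.hyps(1) pW by blast
    define l where "l = least_power p s"
    define us where "us = map (\<lambda>i. (p ^^ i) s) [0..<l]"
    have lpos: "l > 0" and pl: "(p ^^ l) s = s"
      using least_power_of_permutation[OF perm] unfolding l_def by auto
    have dist: "distinct us" using cycle_of_permutation[OF perm, of s] unfolding us_def l_def .
    have len: "length us = l" unfolding us_def by simp
    have ne: "us \<noteq> []" using len lpos by auto
    have cvi: "cv us i = (p ^^ i) s" for i
    proof -
      have "i mod l < l" using lpos by simp
      then have "cv us i = (p ^^ (i mod l)) s" unfolding cv_def len unfolding us_def by simp
      then show ?thesis using funpow_mod_eq[OF pl, of i] by simp
    qed
    have rot: "p (cv us i) = cv us (Suc i)" for i by (simp add: cvi)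
    have inW: "(p ^^ i) s \<in> W" for i
    proof (induction i)
      case 0 then show ?case using s by simp
    next
      case (Suc i) then show ?case using permutes_in_image[OF pW] by simp
    qed
    define Ob where "Ob = set us"
    have OW: "Ob \<subseteq> W"
    proof
      fix x assume "x \<in> Ob"
      then obtain i where "x = cv us i" using set_cv_ex[OF ne] unfolding Ob_def by auto
      then show "x \<in> W" using inW cvi by simp
    qed
    have sO: "s \<in> Ob" using cv_in_set[OF ne, of 0] cvi[of 0] unfolding Ob_def by simp
    have inv: "p y \<in> Ob \<longleftrightarrow> y \<in> Ob" for y
    proof
      assume "p y \<in> Ob"
      then obtain i where i: "p y = cv us i" using set_cv_ex[OF ne] unfolding Ob_def by auto
      have "p (cv us (i + l - 1)) = cv us (i + l)"
        using rot[of "i + l - 1"] lpos by (simp add: Suc_diff_1)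
      also have "\<dots> = cv us i" using cv_add_len[of us i] len by simp
      finally have "p (cv us (i + l - 1)) = p y" using i by simp
      then have "y = cv us (i + l - 1)" using permutes_inj[OF pW] by (metis injD)
      then show "y \<in> Ob" using cv_in_set[OF ne] unfolding Ob_def by simp
    next
      assume "y \<in> Ob"
      then obtain i where i: "y = cv us i" using set_cv_ex[OF ne] unfolding Ob_def by auto
      then show "p y \<in> Ob" using rot cv_in_set[OF ne] unfolding Ob_def by simp
    qed
    define p1 where "p1 = perm_restrict p Ob"
    define p2 where "p2 = perm_restrict p (-Ob)"
    have dec1: "C4 E p = C4 E p1 \<union> C4 E p2" and dec2: "C4 E p1 \<inter> C4 E p2 = {}"
      and dec3: "p = p1 \<circ> p2"
      using decomp(1,2)[of p Ob E, OF inv] decomp(3)[of p Ob, OF inv] unfolding p1_def p2_def by auto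
    have p1col: "p1 = cycle_of_list us"
    proof
      fix x show "p1 x = cycle_of_list us x"
      proof (cases "x \<in> Ob")
        case True
        then obtain i where i: "x = cv us i" using set_cv_ex[OF ne] unfolding Ob_def by auto
        have "p1 x = p x" using True unfolding p1_def by (simp add: perm_restrict_simps)
        also have "\<dots> = cv us (Suc i)" using i rot by simp
        also have "\<dots> = cycle_of_list us x" using i col_rot[OF dist ne] by simp
        finally show ?thesis .
      next
        case False
        then show ?thesis unfolding p1_def Ob_def by (simp add: perm_restrict_simps id_outside_supp)
      qed
    qed
    have p1perm: "p1 permutes Ob" using cycle_permutes[of us] p1col unfolding Ob_def by simp
    have p2eq: "p2 = inv p1 \<circ> p"
    proof -
      have "inv p1 \<circ> p = (inv p1 \<circ> p1) \<circ> p2" using dec3 by (simp add: o_assoc)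
      also have "\<dots> = p2" using permutes_inv_o(2)[OF p1perm] by simp
      finally show ?thesis by simp
    qed
    have "inv p1 permutes W" using permutes_inv[OF p1perm] permutes_subset OW by blast
    then have "p2 permutes W" using p2eq permutes_compose[OF pW] by simp
    then have p2perm: "p2 permutes (W - Ob)"
      by (rule permutes_shrink) (simp add: p2_def perm_restrict_simps)
    have p2PP: "p2 \<in> PP E (W - Ob)"
      using p2perm pE unfolding PP_def p2_def by (auto simp: perm_restrict_simps)
    have sub: "W - Ob \<subset> W" using sO s by blast
    have IH: "even (card (W - Ob)) \<and> (-1::int) ^ (card (W - Ob) div 2) * sign p2 = (-1) ^ card (C4 E p2)"
      using psubset.IH[OF sub p2PP] .
    have Eedge: "E (cv us i) (cv us (Suc i))" for i
      using pE inW[of i] rot[of i] cvi[of i] by metis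
    have l1: "l \<noteq> 1"
    proof
      assume "l = 1"
      then have "p s = s" using pl by simp
      then show False using pE s assms(3) by metis
    qed
    then have l2: "length us \<ge> 2" using len lpos by simp
    have par: "((p ^^ i) s \<in> X) \<longleftrightarrow> ((s \<in> X) \<longleftrightarrow> even i)" for i
    proof (induction i)
      case 0 then show ?case by simp
    next
      case (Suc i)
      have "E ((p ^^ i) s) (p ((p ^^ i) s))" using pE inW[of i] by blast
      then have "((p ^^ i) s \<in> X) \<longleftrightarrow> (p ((p ^^ i) s) \<notin> X)" using assms(4) by blast
      then show ?case using Suc.IH by (cases "s \<in> X"; cases "even i") auto
    qed
    have evenl: "even l" using par[of l] pl by (cases "s \<in> X") auto
    have rot1: "p1 (cv us i) = cv us (Suc i)" for i
      using rot[of i] cv_in_set[OF ne, of i] unfolding p1_def Ob_def by (simp add: perm_restrict_simps)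
    have C4p1: "C4 E p1 = (if 4 dvd l then {cycle_edges us} else {})"
      using C4_rot[OF dist l2, of p1 E] p1perm rot1 is4k_iff[of us E, OF dist l2 Eedge] len
      unfolding Ob_def by simp
    have cardO: "card Ob = l" using distinct_card[OF dist] len unfolding Ob_def by simp
    have cardW: "card W = card (W - Ob) + l"
      using card_Diff_subset[OF finite_subset[OF OW psubset.hyps(1)] OW] cardO
        card_mono[OF psubset.hyps(1) OW] by simp
    have permp2: "permutation p2" using permutation_permutes p2perm psubset.hyps(1) by blast
    have sgn: "sign p = (-1) ^ (l - 1) * sign p2"
    proof -
      have "permutation p1" using p1col permutation_of_cycle by simp
      then have "sign p = sign p1 * sign p2"
        using dec3 sign_compose[OF _ permp2, of p1] by simp
      then show ?thesis using sign_col[OF dist ne] p1col len by simp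
    qed
    have finC2: "finite (C4 E p2)" using C4_finite[OF p2perm] psubset.hyps(1) by simp
    have finC1: "finite (C4 E p1)" using C4p1 by simp
    have cardC: "card (C4 E p) = card (C4 E p1) + card (C4 E p2)"
      using dec1 dec2 card_Un_disjoint[OF finC1 finC2] by simp
    have c1: "card (C4 E p1) = (if 4 dvd l then 1 else 0)" using C4p1 by simp
    have ev: "even (card W)" using cardW IH evenl by simp
    have dv: "card W div 2 = card (W - Ob) div 2 + l div 2" using cardW IH evenl by presburger
    have "(-1::int) ^ (card W div 2) * sign p
        = ((-1) ^ (l div 2) * (-1) ^ (l - 1)) * ((-1) ^ (card (W - Ob) div 2) * sign p2)"
      using dv sgn by (simp add: power_add algebra_simps)
    also have "\<dots> = (if 4 dvd l then -1 else 1) * (-1) ^ card (C4 E p2)"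
      using sign_arith[OF evenl] l2 len IH by simp
    also have "\<dots> = (-1) ^ card (C4 E p)" using cardC c1 by (simp add: power_add)
    finally show ?thesis using ev by simp
  qed
qed

lemma C4_Orient:
  assumes "is_4k_cycle E R" "\<rho> \<in> Orient R"
  shows "C4 E \<rho> = {R}"
proof -
  have cyc: "is_cycle E R" using assms(1) unfolding is_4k_cycle_def by simp
  obtain us where us: "distinct us" "length us \<ge> 3" "R = cycle_edges us"
    using is_cycle_obtain[OF cyc] by metis
  have ne: "us \<noteq> []" using us(2) by auto
  have l2: "length us \<ge> 2" using us(2) by simp
  have cc: "C4 E (cycle_of_list us) = {R}"
    using C4_rot[OF us(1) l2 cycle_permutes col_rot[OF us(1) ne], of E] assms(1) us(3) by simp
  have "\<rho> = cycle_of_list us \<or> \<rho> = inv (cycle_of_list us)"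
    using Orient_eq(1)[OF us(1,2)] assms(2) us(3) by blast
  then show ?thesis
  proof
    assume "\<rho> = inv (cycle_of_list us)"
    moreover have "bij (cycle_of_list us)" using permutes_bij[OF cycle_permutes] .
    ultimately show ?thesis using C4_inv cc by metis
  qed (use cc in simp)
qed

lemma comp_facts:
  assumes W: "finite W" and symE: "\<And>a b. E a b \<Longrightarrow> E b a"
    and R: "is_4k_cycle E R" and UW: "cycle_verts R \<subseteq> W"
    and rho: "\<rho> \<in> Orient R" and sigma: "\<sigma> \<in> PP E (W - cycle_verts R)"
  shows "\<rho> \<circ> \<sigma> \<in> PP E W"
    and "perm_restrict (\<rho> \<circ> \<sigma>) (cycle_verts R) = \<rho>"
    and "perm_restrict (\<rho> \<circ> \<sigma>) (- cycle_verts R) = \<sigma>"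
    and "C4 E (\<rho> \<circ> \<sigma>) = insert R (C4 E \<sigma>)"
    and "R \<notin> C4 E \<sigma>"
proof -
  let ?U = "cycle_verts R" and ?t = "\<rho> \<circ> \<sigma>"
  have cyc: "is_cycle E R" using R unfolding is_4k_cycle_def by simp
  have rp: "\<rho> permutes ?U" and pcr: "pc \<rho> R" using rho unfolding Orient_def by auto
  have sp: "\<sigma> permutes (W - ?U)" and sE: "\<forall>i\<in>W - ?U. E i (\<sigma> i)" using sigma unfolding PP_def by auto
  have s_out: "\<sigma> y \<notin> ?U" if "y \<notin> ?U" for y
  proof (cases "y \<in> W")
    case True
    then have "\<sigma> y \<in> W - ?U" using that permutes_in_image[OF sp] by blast
    then show ?thesis by blast
  next
    case False
    then have "\<sigma> y = y" using permutes_not_in[OF sp] by blast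
    then show ?thesis using that by simp
  qed
  have s_in: "\<sigma> y = y" if "y \<in> ?U" for y using permutes_not_in[OF sp] that by blast
  have r_out: "\<rho> y = y" if "y \<notin> ?U" for y using permutes_not_in[OF rp] that by blast
  have inv: "?t y \<in> ?U \<longleftrightarrow> y \<in> ?U" for y
  proof (cases "y \<in> ?U")
    case True
    then show ?thesis using s_in permutes_in_image[OF rp] by simp
  next
    case False
    then show ?thesis using s_out[OF False] r_out by simp
  qed
  show r1: "perm_restrict ?t ?U = \<rho>"
  proof
    fix x show "perm_restrict ?t ?U x = \<rho> x"
      by (cases "x \<in> ?U") (auto simp: perm_restrict_simps s_in r_out)
  qed
  show r2: "perm_restrict ?t (- ?U) = \<sigma>"
  proof
    fix x show "perm_restrict ?t (- ?U) x = \<sigma> x"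
      by (cases "x \<in> ?U") (auto simp: perm_restrict_simps s_in r_out s_out)
  qed
  have "\<rho> permutes W" using permutes_subset[OF rp UW] .
  moreover have "\<sigma> permutes W" using permutes_subset[OF sp] by blast
  ultimately have tp: "?t permutes W" using permutes_compose by blast
  have tE: "E i (?t i)" if "i \<in> W" for i
  proof (cases "i \<in> ?U")
    case True
    have "{i, \<rho> i} \<in> R" using pc_edge[OF pcr True] .
    then show ?thesis using cycle_edge_E[OF cyc _ symE] s_in[OF True] by simp
  next
    case False
    then show ?thesis using sE that s_out[OF False] r_out by simp
  qed
  show "?t \<in> PP E W" using tp tE unfolding PP_def by blast
  have d1: "C4 E ?t = C4 E \<rho> \<union> C4 E \<sigma>" and d2: "C4 E \<rho> \<inter> C4 E \<sigma> = {}"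
    using decomp(1,2)[of ?t ?U E, OF inv] r1 r2 by auto
  have "C4 E \<rho> = {R}" using C4_Orient[OF R rho] .
  then show "C4 E ?t = insert R (C4 E \<sigma>)" and "R \<notin> C4 E \<sigma>" using d1 d2 by auto
qed

lemma decomp_tau:
  assumes W: "finite W"
    and R: "is_4k_cycle E R" and UW: "cycle_verts R \<subseteq> W"
    and tau: "\<tau> \<in> PP E W" and RC: "R \<in> C4 E \<tau>"
  shows "perm_restrict \<tau> (cycle_verts R) \<in> Orient R"
    and "perm_restrict \<tau> (- cycle_verts R) \<in> PP E (W - cycle_verts R)"
    and "\<tau> = perm_restrict \<tau> (cycle_verts R) \<circ> perm_restrict \<tau> (- cycle_verts R)"
proof -
  let ?U = "cycle_verts R"
  let ?r = "perm_restrict \<tau> ?U" and ?s = "perm_restrict \<tau> (- ?U)"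
  have cyc: "is_cycle E R" using R unfolding is_4k_cycle_def by simp
  have tp: "\<tau> permutes W" and tE: "\<forall>i\<in>W. E i (\<tau> i)" using tau unfolding PP_def by auto
  have pct: "pc \<tau> R" using RC unfolding C4_def by simp
  have bt: "bij \<tau>" using permutes_bij[OF tp] .
  have img: "\<tau> ` ?U = ?U" using pc_image[OF cyc pct bij_is_inj[OF bt]] .
  have inv: "\<tau> y \<in> ?U \<longleftrightarrow> y \<in> ?U" for y
  proof
    assume "\<tau> y \<in> ?U"
    then have "\<tau> y \<in> \<tau> ` ?U" using img by simp
    then show "y \<in> ?U" using bij_is_inj[OF bt] by (auto dest: injD)
  next
    assume "y \<in> ?U" then show "\<tau> y \<in> ?U" using pc_closed[OF pct] by blast
  qed
  show dec: "\<tau> = ?r \<circ> ?s" using decomp(3)[of \<tau> ?U, OF inv] .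
  have "bij_betw ?r ?U ?U"
  proof -
    have "inj_on ?r ?U"
      using bij_is_inj[OF bt] unfolding inj_on_def by (auto simp: perm_restrict_simps)
    moreover have "?r ` ?U = ?U"
      using img by (auto simp: perm_restrict_simps image_iff)
    ultimately show ?thesis unfolding bij_betw_def by blast
  qed
  then have rp: "?r permutes ?U" by (rule bij_imp_permutes) (simp add: perm_restrict_simps)
  have "pc ?r R" using pct by (subst pc_cong[of R ?r \<tau>]) (auto simp: perm_restrict_simps)
  then show "?r \<in> Orient R" using rp unfolding Orient_def by blast
  have "?s = inv ?r \<circ> \<tau>"
  proof -
    have "inv ?r \<circ> \<tau> = (inv ?r \<circ> ?r) \<circ> ?s" by (subst dec) (simp add: o_assoc)
    also have "\<dots> = ?s" using permutes_inv_o(2)[OF rp] by simp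
    finally show ?thesis by simp
  qed
  moreover have "inv ?r permutes W" using permutes_subset[OF permutes_inv[OF rp] UW] .
  ultimately have "?s permutes W" using permutes_compose[OF tp] by simp
  then have sp: "?s permutes (W - ?U)"
    by (rule permutes_shrink) (simp add: perm_restrict_simps)
  show "?s \<in> PP E (W - ?U)" using sp tE unfolding PP_def by (auto simp: perm_restrict_simps)
qed

lemma tuple_verts_Nil[simp]: "tuple_verts [] = {}"
  by (simp add: tuple_verts_def)

lemma tuple_verts_Cons[simp]: "tuple_verts (R # T) = cycle_verts R \<union> tuple_verts T"
  by (simp add: tuple_verts_def)

lemma tup_Cons:
  "(R # T) \<in> disjoint_4k_tuples E (length (R # T)) \<longleftrightarrow>
    is_4k_cycle E R \<and> T \<in> disjoint_4k_tuples E (length T) \<and> cycle_verts R \<inter> tuple_verts T = {}"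
proof
  assume a: "(R # T) \<in> disjoint_4k_tuples E (length (R # T))"
  then have c1: "\<forall>R'\<in>set (R # T). is_4k_cycle E R'"
    and c2: "\<forall>i < length (R # T). \<forall>j < length (R # T). i \<noteq> j \<longrightarrow>
        cycle_verts ((R # T) ! i) \<inter> cycle_verts ((R # T) ! j) = {}"
    unfolding disjoint_4k_tuples_def by auto
  have "\<forall>i < length T. \<forall>j < length T. i \<noteq> j \<longrightarrow> cycle_verts (T ! i) \<inter> cycle_verts (T ! j) = {}"
  proof (intro allI impI)
    fix i j assume "i < length T" "j < length T" "i \<noteq> j"
    then show "cycle_verts (T ! i) \<inter> cycle_verts (T ! j) = {}"
      using c2[rule_format, of "Suc i" "Suc j"] by simp
  qed
  then have t: "T \<in> disjoint_4k_tuples E (length T)"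
    using c1 unfolding disjoint_4k_tuples_def by auto
  have "cycle_verts R \<inter> cycle_verts R' = {}" if R'T: "R' \<in> set T" for R'
  proof -
    obtain k where "k < length T" "R' = T ! k" using R'T by (auto simp: in_set_conv_nth)
    then show ?thesis using c2[rule_format, of 0 "Suc k"] by simp
  qed
  then have "cycle_verts R \<inter> tuple_verts T = {}" unfolding tuple_verts_def by blast
  then show "is_4k_cycle E R \<and> T \<in> disjoint_4k_tuples E (length T) \<and> cycle_verts R \<inter> tuple_verts T = {}"
    using c1 t by simp
next
  assume a: "is_4k_cycle E R \<and> T \<in> disjoint_4k_tuples E (length T) \<and> cycle_verts R \<inter> tuple_verts T = {}"
  then have c1: "\<forall>R'\<in>set T. is_4k_cycle E R'"
    and c2: "\<forall>i < length T. \<forall>j < length T. i \<noteq> j \<longrightarrow> cycle_verts (T ! i) \<inter> cycle_verts (T ! j) = {}"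
    and R: "is_4k_cycle E R" and d: "cycle_verts R \<inter> tuple_verts T = {}"
    unfolding disjoint_4k_tuples_def by auto
  have dk: "cycle_verts R \<inter> cycle_verts (T ! k) = {}" if "k < length T" for k
  proof -
    have "T ! k \<in> set T" using that by simp
    then have "cycle_verts (T ! k) \<subseteq> tuple_verts T" unfolding tuple_verts_def by blast
    then show ?thesis using d by blast
  qed
  have "\<forall>i < length (R # T). \<forall>j < length (R # T). i \<noteq> j \<longrightarrow>
        cycle_verts ((R # T) ! i) \<inter> cycle_verts ((R # T) ! j) = {}"
  proof (intro allI impI)
    fix i j assume ij: "i < length (R # T)" "j < length (R # T)" "i \<noteq> j"
    show "cycle_verts ((R # T) ! i) \<inter> cycle_verts ((R # T) ! j) = {}"
    proof (cases i)
      case 0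
      then obtain k where "j = Suc k" using ij(3) by (cases j) auto
      then show ?thesis using 0 dk ij(2) by simp
    next
      case (Suc i')
      show ?thesis
      proof (cases j)
        case 0
        then show ?thesis using Suc dk ij(1) by (simp add: Int_commute)
      next
        case (Suc j')
        then show ?thesis using \<open>i = Suc i'\<close> c2 ij by simp
      qed
    qed
  qed
  then show "(R # T) \<in> disjoint_4k_tuples E (length (R # T))"
    using c1 R unfolding disjoint_4k_tuples_def by auto
qed

lemma star:
  assumes "finite W" "\<And>a b. E a b \<Longrightarrow> E b a"
    and "T \<in> disjoint_4k_tuples E (length T)" "tuple_verts T \<subseteq> W"
  shows "(\<Sum>\<tau>\<in>{\<tau>\<in>PP E W. set T \<subseteq> C4 E \<tau>}. f (card (C4 E \<tau>)))
    = 2 ^ length T * (\<Sum>\<sigma>\<in>PP E (W - tuple_verts T). (f (card (C4 E \<sigma>) + length T) :: real))"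
  using assms(1,3,4)
proof (induction T arbitrary: W f)
  case Nil
  have e: "{\<tau>\<in>PP E W. set [] \<subseteq> C4 E \<tau>} = PP E W" by simp
  show ?case unfolding e by (simp only: list.size tuple_verts_Nil Diff_empty power_0 mult_1 add_0_right)
next
  case (Cons R T)
  let ?U = "cycle_verts R"
  have R: "is_4k_cycle E R" and T: "T \<in> disjoint_4k_tuples E (length T)"
    and d: "?U \<inter> tuple_verts T = {}"
    using Cons.prems(2) unfolding tup_Cons by auto
  have cyc: "is_cycle E R" using R unfolding is_4k_cycle_def by simp
  have UW: "?U \<subseteq> W" using Cons.prems(3) by simp
  have RT: "R \<notin> set T"
  proof
    assume "R \<in> set T"
    then have "?U \<subseteq> tuple_verts T" unfolding tuple_verts_def by blast
    then show False using d cycle_verts_props(2)[OF cyc] by blast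
  qed
  define S' where "S' = {\<sigma>\<in>PP E (W - ?U). set T \<subseteq> C4 E \<sigma>}"
  define \<Phi> where "\<Phi> = (\<lambda>(\<rho>::'a \<Rightarrow> 'a, \<sigma>::'a \<Rightarrow> 'a). \<rho> \<circ> \<sigma>)"
  have cf: "\<And>\<rho> \<sigma>. \<rho> \<in> Orient R \<Longrightarrow> \<sigma> \<in> PP E (W - ?U) \<Longrightarrow>
      \<rho> \<circ> \<sigma> \<in> PP E W \<and> perm_restrict (\<rho> \<circ> \<sigma>) ?U = \<rho> \<and> perm_restrict (\<rho> \<circ> \<sigma>) (- ?U) = \<sigma>
      \<and> C4 E (\<rho> \<circ> \<sigma>) = insert R (C4 E \<sigma>) \<and> R \<notin> C4 E \<sigma>"
    using comp_facts[OF Cons.prems(1) assms(2) R UW] by blast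
  have img: "{\<tau>\<in>PP E W. set (R # T) \<subseteq> C4 E \<tau>} = \<Phi> ` (Orient R \<times> S')"
  proof
    show "{\<tau>\<in>PP E W. set (R # T) \<subseteq> C4 E \<tau>} \<subseteq> \<Phi> ` (Orient R \<times> S')"
    proof
      fix \<tau> assume a: "\<tau> \<in> {\<tau>\<in>PP E W. set (R # T) \<subseteq> C4 E \<tau>}"
      then have tau: "\<tau> \<in> PP E W" and RC: "R \<in> C4 E \<tau>" and TC: "set T \<subseteq> C4 E \<tau>" by auto
      define r where "r = perm_restrict \<tau> ?U"
      define s where "s = perm_restrict \<tau> (- ?U)"
      have r: "r \<in> Orient R" and s: "s \<in> PP E (W - ?U)" and eq: "\<tau> = r \<circ> s"
        using decomp_tau[OF Cons.prems(1) R UW tau RC] unfolding r_def s_def by auto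
      have c: "C4 E (r \<circ> s) = insert R (C4 E s)" using cf[OF r s] by blast
      have "C4 E \<tau> = insert R (C4 E s)" by (subst eq) (rule c)
      then have "set T \<subseteq> C4 E s" using TC RT by auto
      then have mem: "(r, s) \<in> Orient R \<times> S'" using r s unfolding S'_def by simp
      have "\<tau> = \<Phi> (r, s)" unfolding \<Phi>_def by (subst eq) simp
      then show "\<tau> \<in> \<Phi> ` (Orient R \<times> S')" using mem by (rule image_eqI)
    qed
    show "\<Phi> ` (Orient R \<times> S') \<subseteq> {\<tau>\<in>PP E W. set (R # T) \<subseteq> C4 E \<tau>}"
    proof
      fix \<tau> assume "\<tau> \<in> \<Phi> ` (Orient R \<times> S')"
      then obtain \<rho> \<sigma> where rs: "\<rho> \<in> Orient R" "\<sigma> \<in> S'" and t: "\<tau> = \<rho> \<circ> \<sigma>"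
        unfolding \<Phi>_def by auto
      have s: "\<sigma> \<in> PP E (W - ?U)" and sT: "set T \<subseteq> C4 E \<sigma>" using rs(2) unfolding S'_def by auto
      show "\<tau> \<in> {\<tau>\<in>PP E W. set (R # T) \<subseteq> C4 E \<tau>}" using cf[OF rs(1) s] sT t by auto
    qed
  qed
  have inj: "inj_on \<Phi> (Orient R \<times> S')"
  proof (rule inj_onI)
    fix x y assume x: "x \<in> Orient R \<times> S'" and y: "y \<in> Orient R \<times> S'" and e: "\<Phi> x = \<Phi> y"
    obtain r1 s1 where x': "x = (r1, s1)" by (cases x)
    obtain r2 s2 where y': "y = (r2, s2)" by (cases y)
    have "r1 \<in> Orient R" "s1 \<in> PP E (W - ?U)" "r2 \<in> Orient R" "s2 \<in> PP E (W - ?U)"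
      using x y x' y' unfolding S'_def by auto
    then have "perm_restrict (r1 \<circ> s1) ?U = r1" "perm_restrict (r1 \<circ> s1) (- ?U) = s1"
      "perm_restrict (r2 \<circ> s2) ?U = r2" "perm_restrict (r2 \<circ> s2) (- ?U) = s2"
      using cf by blast+
    moreover have "r1 \<circ> s1 = r2 \<circ> s2" using e x' y' unfolding \<Phi>_def by simp
    ultimately have "r1 = r2" "s1 = s2" by auto
    then show "x = y" using x' y' by simp
  qed
  have finW: "finite (W - ?U)" using Cons.prems(1) by simp
  have "(\<Sum>\<tau>\<in>{\<tau>\<in>PP E W. set (R # T) \<subseteq> C4 E \<tau>}. f (card (C4 E \<tau>)))
      = (\<Sum>x\<in>Orient R \<times> S'. f (card (C4 E (\<Phi> x))))"
    unfolding img using sum.reindex[OF inj] by (simp add: comp_def)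
  also have "\<dots> = (\<Sum>(\<rho>, \<sigma>)\<in>Orient R \<times> S'. f (card (C4 E (\<rho> \<circ> \<sigma>))))"
    unfolding \<Phi>_def by (simp add: case_prod_unfold)
  also have "\<dots> = (\<Sum>\<rho>\<in>Orient R. \<Sum>\<sigma>\<in>S'. f (card (C4 E (\<rho> \<circ> \<sigma>))))"
    by (rule sum.cartesian_product[symmetric])
  also have "\<dots> = (\<Sum>\<rho>\<in>Orient R. \<Sum>\<sigma>\<in>S'. f (card (C4 E \<sigma>) + 1))"
  proof (intro sum.cong refl)
    fix \<rho> \<sigma> assume r: "\<rho> \<in> Orient R" and s: "\<sigma> \<in> S'"
    have s': "\<sigma> \<in> PP E (W - ?U)" using s unfolding S'_def by simp
    have fin: "finite (C4 E \<sigma>)" using C4_finite[OF _ finW] s' unfolding PP_def by blast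
    show "f (card (C4 E (\<rho> \<circ> \<sigma>))) = f (card (C4 E \<sigma>) + 1)"
      using cf[OF r s'] fin by simp
  qed
  also have "\<dots> = 2 * (\<Sum>\<sigma>\<in>S'. f (card (C4 E \<sigma>) + 1))"
    using card_Orient[OF cyc] by simp
  also have "(\<Sum>\<sigma>\<in>S'. f (card (C4 E \<sigma>) + 1))
      = 2 ^ length T * (\<Sum>\<sigma>\<in>PP E (W - ?U - tuple_verts T). f (card (C4 E \<sigma>) + length T + 1))"
  proof -
    have tv: "tuple_verts T \<subseteq> W - ?U" using Cons.prems(3) d by auto
    show ?thesis unfolding S'_def using Cons.IH[OF finW T tv, of "\<lambda>k. f (k + 1)"] by simp
  qed
  also have "W - ?U - tuple_verts T = W - tuple_verts (R # T)" by auto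
  finally show ?case by (simp add: algebra_simps)
qed

lemma comb_term:
  assumes "z \<le> c"
  shows "(2::real) ^ z / fact z * real (\<Prod>{c - z + 1..c}) * (-1) ^ (c + z)
    = real (c choose z) * 2 ^ z * (-1) ^ (c - z)"
proof -
  have f: "(fact c :: nat) = fact (c - z) * \<Prod>{c - z + 1..c}"
    using fact_eq_fact_times[of "c - z" c] by (metis Suc_eq_plus1 diff_le_self)
  have g: "real (fact c) = real (fact (c - z)) * real (\<Prod>{c - z + 1..c})"
    using f by (metis of_nat_mult)
  have h: "(fact c :: real) = fact (c - z) * real (\<Prod>{c - z + 1..c})"
    using g by (simp only: of_nat_fact)
  have "real (\<Prod>{c - z + 1..c}) = fact c / fact (c - z)"
    using h by (simp add: field_simps)
  then have "(2::real) ^ z / fact z * real (\<Prod>{c - z + 1..c}) = 2 ^ z * (fact c / (fact z * fact (c - z)))"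
    by simp
  also have "\<dots> = 2 ^ z * real (c choose z)" using binomial_fact[OF assms, where 'a=real] by simp
  finally have a: "(2::real) ^ z / fact z * real (\<Prod>{c - z + 1..c}) = 2 ^ z * real (c choose z)" .
  have e: "c + z = (c - z) + 2 * z" using assms by simp
  have "(-1::real) ^ (c + z) = (-1) ^ ((c - z) + 2 * z)" by (subst e) (rule refl)
  also have "\<dots> = (-1) ^ (c - z) * ((-1) ^ 2) ^ z" by (simp only: power_add power_mult)
  also have "\<dots> = (-1) ^ (c - z)" by simp
  finally have b: "(-1::real) ^ (c + z) = (-1) ^ (c - z)" .
  show ?thesis using a b by simp
qed

lemma comb_sum:
  assumes "c \<le> m"
  shows "(\<Sum>z=0..m. (2::real) ^ z / fact z * real (if z \<le> c then \<Prod>{c - z + 1..c} else 0) * (-1) ^ (c + z)) = 1"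
proof -
  have "(\<Sum>z=0..m. (2::real) ^ z / fact z * real (if z \<le> c then \<Prod>{c - z + 1..c} else 0) * (-1) ^ (c + z))
      = (\<Sum>z=0..c. (2::real) ^ z / fact z * real (if z \<le> c then \<Prod>{c - z + 1..c} else 0) * (-1) ^ (c + z))"
    by (rule sum.mono_neutral_right) (use assms in auto)
  also have "\<dots> = (\<Sum>z=0..c. real (c choose z) * 2 ^ z * (-1) ^ (c - z))"
  proof (rule sum.cong[OF refl])
    fix z assume "z \<in> {0..c}"
    then have zc: "z \<le> c" by simp
    show "(2::real) ^ z / fact z * real (if z \<le> c then \<Prod>{c - z + 1..c} else 0) * (-1) ^ (c + z)
        = real (c choose z) * 2 ^ z * (-1) ^ (c - z)"
      by (simp only: if_P[OF zc] comb_term[OF zc])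
  qed
  also have "\<dots> = (2 + (-1::real)) ^ c"
    using binomial_ring[of "2::real" "-1" c] by (simp add: atLeast0AtMost)
  finally show ?thesis by simp
qed

lemma cycle_in_V:
  assumes "simple_graph V E" "is_cycle E R"
  shows "cycle_verts R \<subseteq> V"
proof
  fix x assume x: "x \<in> cycle_verts R"
  obtain us where us: "distinct us" "length us \<ge> 3" "\<And>i. E (cv us i) (cv us (Suc i))"
      "R = cycle_edges us"
    using is_cycle_obtain[OF assms(2)] by metis
  have ne: "us \<noteq> []" using us(2) by auto
  have "x \<in> set us" using x verts_cycle_edges[OF ne] us(4) by simp
  then obtain i where "x = cv us i" using set_cv_ex[OF ne] by auto
  then show "x \<in> V" using us(3)[of i] assms(1) unfolding simple_graph_def by metis
qed

lemma card_verts_cycle: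
  assumes "is_cycle E R"
  shows "card (cycle_verts R) = card R"
proof -
  obtain us where us: "distinct us" "length us \<ge> 3" "R = cycle_edges us"
    using is_cycle_obtain[OF assms] by metis
  have ne: "us \<noteq> []" using us(2) by auto
  show ?thesis using verts_cycle_edges[OF ne] card_cycle_edges[OF us(1,2)] distinct_card[OF us(1)] us(3)
    by simp
qed

lemma tv_props:
  assumes "simple_graph V E"
  shows "T \<in> disjoint_4k_tuples E (length T) \<Longrightarrow> tuple_verts T \<subseteq> V \<and> 4 dvd card (tuple_verts T)"
proof (induction T)
  case Nil then show ?case by simp
next
  case (Cons R T)
  have R: "is_4k_cycle E R" and T: "T \<in> disjoint_4k_tuples E (length T)"
    and d: "cycle_verts R \<inter> tuple_verts T = {}"
    using Cons.prems unfolding tup_Cons by auto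
  have cyc: "is_cycle E R" using R unfolding is_4k_cycle_def by simp
  have IH: "tuple_verts T \<subseteq> V" "4 dvd card (tuple_verts T)" using Cons.IH[OF T] by auto
  have finV: "finite V" using assms unfolding simple_graph_def by simp
  have RV: "cycle_verts R \<subseteq> V" using cycle_in_V[OF assms cyc] .
  have "card (tuple_verts (R # T)) = card (cycle_verts R) + card (tuple_verts T)"
    using card_Un_disjoint[OF cycle_verts_props(1)[OF cyc] finite_subset[OF IH(1) finV] d] by simp
  moreover have "4 dvd card (cycle_verts R)"
    using card_verts_cycle[OF cyc] R unfolding is_4k_cycle_def by simp
  ultimately show ?case using IH RV by simp
qed

lemma tup_finite:
  assumes "simple_graph V E"
  shows "finite (disjoint_4k_tuples E z)"
proof -
  have finV: "finite V" using assms unfolding simple_graph_def by simp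
  have "disjoint_4k_tuples E z \<subseteq> {xs. set xs \<subseteq> Pow (Pow V) \<and> length xs = z}"
  proof
    fix T assume T: "T \<in> disjoint_4k_tuples E z"
    have "R \<in> Pow (Pow V)" if "R \<in> set T" for R
    proof -
      have "is_cycle E R" using T that unfolding disjoint_4k_tuples_def is_4k_cycle_def by auto
      then have "cycle_verts R \<subseteq> V" using cycle_in_V[OF assms] by blast
      then show ?thesis unfolding cycle_verts_def by auto
    qed
    then show "T \<in> {xs. set xs \<subseteq> Pow (Pow V) \<and> length xs = z}"
      using T unfolding disjoint_4k_tuples_def by auto
  qed
  moreover have "finite {xs. set xs \<subseteq> Pow (Pow V) \<and> length xs = z}"
    using finite_lists_length_eq[of "Pow (Pow V)" z] finV by simp
  ultimately show ?thesis using finite_subset by blast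
qed

lemma count_tup:
  assumes "bij \<tau>"
  shows "{T \<in> disjoint_4k_tuples E z. set T \<subseteq> C4 E \<tau>} = {T. length T = z \<and> distinct T \<and> set T \<subseteq> C4 E \<tau>}"
proof
  show "{T \<in> disjoint_4k_tuples E z. set T \<subseteq> C4 E \<tau>} \<subseteq> {T. length T = z \<and> distinct T \<and> set T \<subseteq> C4 E \<tau>}"
  proof
    fix T assume a: "T \<in> {T \<in> disjoint_4k_tuples E z. set T \<subseteq> C4 E \<tau>}"
    then have len: "length T = z" and c4: "\<forall>R\<in>set T. is_4k_cycle E R"
      and dj: "\<forall>i < z. \<forall>j < z. i \<noteq> j \<longrightarrow> cycle_verts (T ! i) \<inter> cycle_verts (T ! j) = {}"
      and sub: "set T \<subseteq> C4 E \<tau>"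
      unfolding disjoint_4k_tuples_def by auto
    have "distinct T"
    proof (subst distinct_conv_nth, intro allI impI)
      fix i j assume ij: "i < length T" "j < length T" "i \<noteq> j"
      show "T ! i \<noteq> T ! j"
      proof
        assume e: "T ! i = T ! j"
        have "is_cycle E (T ! i)" using c4 ij(1) unfolding is_4k_cycle_def by simp
        then have "cycle_verts (T ! i) \<noteq> {}" using cycle_verts_props(2) by blast
        moreover have "cycle_verts (T ! i) \<inter> cycle_verts (T ! j) = {}" using dj ij len by simp
        ultimately show False using e by simp
      qed
    qed
    then show "T \<in> {T. length T = z \<and> distinct T \<and> set T \<subseteq> C4 E \<tau>}" using len sub by simp
  qed
  show "{T. length T = z \<and> distinct T \<and> set T \<subseteq> C4 E \<tau>} \<subseteq> {T \<in> disjoint_4k_tuples E z. set T \<subseteq> C4 E \<tau>}"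
  proof
    fix T assume a: "T \<in> {T. length T = z \<and> distinct T \<and> set T \<subseteq> C4 E \<tau>}"
    then have len: "length T = z" and dist: "distinct T" and sub: "set T \<subseteq> C4 E \<tau>" by auto
    have c4: "\<forall>R\<in>set T. is_4k_cycle E R" using sub unfolding C4_def by auto
    have "\<forall>i < z. \<forall>j < z. i \<noteq> j \<longrightarrow> cycle_verts (T ! i) \<inter> cycle_verts (T ! j) = {}"
    proof (intro allI impI)
      fix i j assume ij: "i < z" "j < z" "i \<noteq> j"
      have "T ! i \<noteq> T ! j" using dist ij len by (simp add: nth_eq_iff_index_eq)
      moreover have "T ! i \<in> C4 E \<tau>" "T ! j \<in> C4 E \<tau>" using sub ij len by auto
      ultimately show "cycle_verts (T ! i) \<inter> cycle_verts (T ! j) = {}"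
        using C4_disjoint[OF assms] by blast
    qed
    then show "T \<in> {T \<in> disjoint_4k_tuples E z. set T \<subseteq> C4 E \<tau>}"
      using len c4 sub unfolding disjoint_4k_tuples_def by auto
  qed
qed

lemma card_count:
  assumes "finite C"
  shows "card {T. length T = z \<and> distinct T \<and> set T \<subseteq> C} = (if z \<le> card C then \<Prod>{card C - z + 1..card C} else 0)"
proof (cases "z \<le> card C")
  case True
  then show ?thesis using card_lists_distinct_length_eq[OF assms True] by simp
next
  case False
  have "{T. length T = z \<and> distinct T \<and> set T \<subseteq> C} = {}"
  proof (rule ccontr)
    assume "{T. length T = z \<and> distinct T \<and> set T \<subseteq> C} \<noteq> {}"
    then obtain T where T: "length T = z" "distinct T" "set T \<subseteq> C" by blast
    then have "card (set T) \<le> card C" using card_mono[OF assms] by blast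
    then show False using distinct_card[OF T(2)] T(1) False by simp
  qed
  then have "card {T. length T = z \<and> distinct T \<and> set T \<subseteq> C} = 0" by (simp only: card.empty)
  then show ?thesis using False by simp
qed

theorem theorem1:
  fixes V :: "'a set" and E :: "'a \<Rightarrow> 'a \<Rightarrow> bool" and m :: nat
  assumes "simple_graph V E"
    and "bipartite V E"
    and "\<forall>z. disjoint_4k_tuples E z \<noteq> {} \<longrightarrow> z \<le> m"
  shows "real_of_int (per_on E V) =
    (if even (card V)
     then (-1) ^ (card V div 2) *
          (\<Sum>z = 0..m. 4 ^ z / fact z *
             (\<Sum>T \<in> disjoint_4k_tuples E z. real_of_int (det_on E (V - tuple_verts T))))
     else 0)"
proof -
  have finV: "finite V" and symE: "\<And>a b. E a b \<Longrightarrow> E b a" and irr: "\<forall>x. \<not> E x x"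
    using assms(1) unfolding simple_graph_def by auto
  obtain X where bip: "\<forall>x y. E x y \<longrightarrow> (x \<in> X \<longleftrightarrow> y \<notin> X)"
    using assms(2) unfolding bipartite_def by blast
  have perPP: "per_on E V = int (card (PP E V))" using per_PP[OF finV] .
  have sm: "even (card W) \<and> (-1::int) ^ (card W div 2) * sign p = (-1) ^ card (C4 E p)"
    if "finite W" "p \<in> PP E W" for W p
    using sign_main[OF that irr bip] .
  show ?thesis
  proof (cases "even (card V)")
    case False
    then have "PP E V = {}" using sm finV by blast
    then show ?thesis using False perPP by simp
  next
    case True
    define n where "n = card V"
    define tup where "tup = disjoint_4k_tuples E"
    have fintup: "finite (tup z)" for z unfolding tup_def using tup_finite[OF assms(1)] .
    have finPP: "finite (PP E V)" using finite_PP[OF finV] .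
    have tupl: "T \<in> tup z \<Longrightarrow> length T = z" for T z
      unfolding tup_def disjoint_4k_tuples_def by simp
    have tupl2: "T \<in> tup z \<Longrightarrow> T \<in> disjoint_4k_tuples E (length T)" for T z
      using tupl[of T z] unfolding tup_def by simp
    have step1: "(-1::real) ^ (n div 2) * real_of_int (det_on E (V - tuple_verts T))
        = (\<Sum>\<sigma>\<in>PP E (V - tuple_verts T). (-1) ^ card (C4 E \<sigma>))"
      if T: "T \<in> tup z" for T z
    proof -
      define W where "W = V - tuple_verts T"
      have tvp: "tuple_verts T \<subseteq> V" "4 dvd card (tuple_verts T)"
        using tv_props[OF assms(1) tupl2[OF T]] by auto
      have finW: "finite W" unfolding W_def using finV by simp
      have cardV: "n = card W + card (tuple_verts T)"
        unfolding n_def W_def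
        using card_Diff_subset[OF finite_subset[OF tvp(1) finV] tvp(1)] card_mono[OF finV tvp(1)] by simp
      have trm: "(-1::real) ^ (n div 2) * real_of_int (sign \<sigma>) = (-1) ^ card (C4 E \<sigma>)"
        if s: "\<sigma> \<in> PP E W" for \<sigma>
      proof -
        have sw: "even (card W)" "(-1::int) ^ (card W div 2) * sign \<sigma> = (-1) ^ card (C4 E \<sigma>)"
          using sm[OF finW s] by auto
        have "n div 2 = card W div 2 + 2 * (card (tuple_verts T) div 4)"
          using cardV sw(1) tvp(2) by presburger
        then have "(-1::real) ^ (n div 2) = (-1) ^ (card W div 2)"
          by (simp add: power_add power_mult)
        then have "(-1::real) ^ (n div 2) * real_of_int (sign \<sigma>)
            = real_of_int ((-1::int) ^ (card W div 2) * sign \<sigma>)" by simp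
        also have "\<dots> = (-1) ^ card (C4 E \<sigma>)" using sw(2) by simp
        finally show ?thesis .
      qed
      have "(-1::real) ^ (n div 2) * real_of_int (det_on E W)
          = (\<Sum>\<sigma>\<in>PP E W. (-1::real) ^ (n div 2) * real_of_int (sign \<sigma>))"
        unfolding det_PP[OF finW] by (simp add: sum_distrib_left)
      also have "\<dots> = (\<Sum>\<sigma>\<in>PP E W. (-1) ^ card (C4 E \<sigma>))"
        by (rule sum.cong[OF refl]) (rule trm)
      finally show ?thesis unfolding W_def .
    qed
    have step2: "(\<Sum>\<sigma>\<in>PP E (V - tuple_verts T). (-1::real) ^ card (C4 E \<sigma>))
        = (1 / 2 ^ z) * (\<Sum>\<tau>\<in>{\<tau>\<in>PP E V. set T \<subseteq> C4 E \<tau>}. (-1) ^ card (C4 E \<tau>) * (-1) ^ z)"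
      if T: "T \<in> tup z" for T z
    proof -
      have tvp: "tuple_verts T \<subseteq> V" using tv_props[OF assms(1) tupl2[OF T]] by auto
      have st: "(\<Sum>\<tau>\<in>{\<tau>\<in>PP E V. set T \<subseteq> C4 E \<tau>}. (-1::real) ^ card (C4 E \<tau>) * (-1) ^ z)
          = 2 ^ z * (\<Sum>\<sigma>\<in>PP E (V - tuple_verts T). (-1) ^ (card (C4 E \<sigma>) + z) * (-1) ^ z)"
        using star[OF finV symE tupl2[OF T] tvp, of "\<lambda>k. (-1::real) ^ k * (-1) ^ z"] tupl[OF T]
        by simp
      have "(-1::real) ^ (k + z) * (-1) ^ z = (-1) ^ k" for k
      proof -
        have "(-1::real) ^ (k + z) * (-1) ^ z = (-1) ^ k * ((-1) ^ z * (-1) ^ z)"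
          by (simp add: power_add)
        also have "(-1::real) ^ z * (-1) ^ z = 1" by (simp add: power_add[symmetric])
        finally show ?thesis by simp
      qed
      then have "(\<Sum>\<tau>\<in>{\<tau>\<in>PP E V. set T \<subseteq> C4 E \<tau>}. (-1::real) ^ card (C4 E \<tau>) * (-1) ^ z)
          = 2 ^ z * (\<Sum>\<sigma>\<in>PP E (V - tuple_verts T). (-1) ^ card (C4 E \<sigma>))"
        using st by simp
      then show ?thesis by simp
    qed
    have tau1: "(\<Sum>z=0..m. (2::real) ^ z / fact z *
          (real (card {T \<in> tup z. set T \<subseteq> C4 E \<tau>}) * ((-1) ^ card (C4 E \<tau>) * (-1) ^ z))) = 1"
      if tau: "\<tau> \<in> PP E V" for \<tau>
    proof -
      have tp: "\<tau> permutes V" using tau unfolding PP_def by simp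
      have bt: "bij \<tau>" using permutes_bij[OF tp] .
      have finC: "finite (C4 E \<tau>)" using C4_finite[OF tp finV] .
      define c where "c = card (C4 E \<tau>)"
      have cnt: "card {T \<in> tup z. set T \<subseteq> C4 E \<tau>} = (if z \<le> c then \<Prod>{c - z + 1..c} else 0)" for z
        unfolding tup_def count_tup[OF bt] c_def using card_count[OF finC] .
      have cm: "c \<le> m"
      proof -
        obtain L where L: "set L = C4 E \<tau>" "distinct L" using finite_distinct_list[OF finC] by blast
        have "length L = c" using distinct_card[OF L(2)] L(1) c_def by simp
        then have "L \<in> {T. length T = c \<and> distinct T \<and> set T \<subseteq> C4 E \<tau>}" using L by simp
        then have "L \<in> disjoint_4k_tuples E c" using count_tup[OF bt, of E c] by blast
        then show ?thesis using assms(3) by blast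
      qed
      have "(\<Sum>z=0..m. (2::real) ^ z / fact z *
          (real (card {T \<in> tup z. set T \<subseteq> C4 E \<tau>}) * ((-1) ^ card (C4 E \<tau>) * (-1) ^ z)))
          = (\<Sum>z=0..m. (2::real) ^ z / fact z * real (if z \<le> c then \<Prod>{c - z + 1..c} else 0) * (-1) ^ (c + z))"
        by (rule sum.cong[OF refl]) (simp only: cnt c_def[symmetric] power_add mult.assoc)
      also have "\<dots> = 1" using comb_sum[OF cm] .
      finally show ?thesis .
    qed
    have "(-1::real) ^ (n div 2) *
          (\<Sum>z = 0..m. 4 ^ z / fact z * (\<Sum>T \<in> tup z. real_of_int (det_on E (V - tuple_verts T))))
        = (\<Sum>z = 0..m. 4 ^ z / fact z * (\<Sum>T \<in> tup z. (-1::real) ^ (n div 2) * real_of_int (det_on E (V - tuple_verts T))))"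
      by (simp add: sum_distrib_left mult.left_commute)
    also have "\<dots> = (\<Sum>z = 0..m. 4 ^ z / fact z * (\<Sum>T \<in> tup z.
          (1 / 2 ^ z) * (\<Sum>\<tau>\<in>{\<tau>\<in>PP E V. set T \<subseteq> C4 E \<tau>}. (-1) ^ card (C4 E \<tau>) * (-1) ^ z)))"
    proof (rule sum.cong[OF refl])
      fix z
      have "(\<Sum>T \<in> tup z. (-1::real) ^ (n div 2) * real_of_int (det_on E (V - tuple_verts T)))
          = (\<Sum>T \<in> tup z. (1 / 2 ^ z) * (\<Sum>\<tau>\<in>{\<tau>\<in>PP E V. set T \<subseteq> C4 E \<tau>}. (-1) ^ card (C4 E \<tau>) * (-1) ^ z))"
        by (rule sum.cong[OF refl]) (simp only: step1 step2)
      then show "4 ^ z / fact z * (\<Sum>T \<in> tup z. (-1::real) ^ (n div 2) * real_of_int (det_on E (V - tuple_verts T)))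
          = 4 ^ z / fact z * (\<Sum>T \<in> tup z. (1 / 2 ^ z) * (\<Sum>\<tau>\<in>{\<tau>\<in>PP E V. set T \<subseteq> C4 E \<tau>}. (-1) ^ card (C4 E \<tau>) * (-1) ^ z))"
        by simp
    qed
    also have "\<dots> = (\<Sum>z = 0..m. 2 ^ z / fact z * (\<Sum>T \<in> tup z.
          (\<Sum>\<tau>\<in>{\<tau>\<in>PP E V. set T \<subseteq> C4 E \<tau>}. (-1::real) ^ card (C4 E \<tau>) * (-1) ^ z)))"
    proof (rule sum.cong[OF refl])
      fix z
      have f4: "(4::real) ^ z = 2 ^ z * 2 ^ z"
        by (simp add: power_mult_distrib[symmetric])
      show "4 ^ z / fact z * (\<Sum>T \<in> tup z. (1 / 2 ^ z) * (\<Sum>\<tau>\<in>{\<tau>\<in>PP E V. set T \<subseteq> C4 E \<tau>}. (-1::real) ^ card (C4 E \<tau>) * (-1) ^ z))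
          = 2 ^ z / fact z * (\<Sum>T \<in> tup z. (\<Sum>\<tau>\<in>{\<tau>\<in>PP E V. set T \<subseteq> C4 E \<tau>}. (-1::real) ^ card (C4 E \<tau>) * (-1) ^ z))"
        unfolding sum_distrib_left[symmetric] f4 by simp
    qed
    also have "\<dots> = (\<Sum>z = 0..m. 2 ^ z / fact z * (\<Sum>\<tau>\<in>PP E V.
          real (card {T \<in> tup z. set T \<subseteq> C4 E \<tau>}) * ((-1::real) ^ card (C4 E \<tau>) * (-1) ^ z)))"
    proof (rule sum.cong[OF refl])
      fix z
      have "(\<Sum>T \<in> tup z. (\<Sum>\<tau>\<in>{\<tau>\<in>PP E V. set T \<subseteq> C4 E \<tau>}. (-1::real) ^ card (C4 E \<tau>) * (-1) ^ z))
          = (\<Sum>\<tau>\<in>PP E V. (\<Sum>T\<in>{T\<in>tup z. set T \<subseteq> C4 E \<tau>}. (-1::real) ^ card (C4 E \<tau>) * (-1) ^ z))"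
        using sum.swap_restrict[OF fintup finPP, of "\<lambda>T \<tau>. (-1::real) ^ card (C4 E \<tau>) * (-1) ^ z"
            "\<lambda>T \<tau>. set T \<subseteq> C4 E \<tau>"] by simp
      also have "\<dots> = (\<Sum>\<tau>\<in>PP E V. real (card {T \<in> tup z. set T \<subseteq> C4 E \<tau>}) * ((-1::real) ^ card (C4 E \<tau>) * (-1) ^ z))"
        by simp
      finally show "2 ^ z / fact z * (\<Sum>T \<in> tup z. (\<Sum>\<tau>\<in>{\<tau>\<in>PP E V. set T \<subseteq> C4 E \<tau>}. (-1::real) ^ card (C4 E \<tau>) * (-1) ^ z))
          = 2 ^ z / fact z * (\<Sum>\<tau>\<in>PP E V. real (card {T \<in> tup z. set T \<subseteq> C4 E \<tau>}) * ((-1::real) ^ card (C4 E \<tau>) * (-1) ^ z))"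
        by simp
    qed
    also have "\<dots> = (\<Sum>\<tau>\<in>PP E V. \<Sum>z = 0..m. 2 ^ z / fact z *
          (real (card {T \<in> tup z. set T \<subseteq> C4 E \<tau>}) * ((-1::real) ^ card (C4 E \<tau>) * (-1) ^ z)))"
      by (simp add: sum_distrib_left sum.swap[of _ "PP E V"])
    also have "\<dots> = (\<Sum>\<tau>\<in>PP E V. (1::real))"
      by (rule sum.cong[OF refl]) (rule tau1)
    also have "\<dots> = real (card (PP E V))" by simp
    finally have main: "(-1::real) ^ (n div 2) *
          (\<Sum>z = 0..m. 4 ^ z / fact z * (\<Sum>T \<in> tup z. real_of_int (det_on E (V - tuple_verts T))))
        = real (card (PP E V))" .
    show ?thesis using main True perPP unfolding n_def tup_def by simp
  qed
qed

end
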